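(* Let $\Bbbk$ be a field of characteristic zero, let $U(3)$ be the associative conformal algebra defined below, and for $\alpha,\Delta\in\Bbbk$ let $M_{(\alpha,\Delta)}$ be the conformal $U(3)$-module defined below. If $\Delta\neq 0$, then \[ \dim_\Bbbk H^1(U(3),M_{(\alpha,\Delta)})=\begin{cases}2, & \Delta=1 \text{ and } \alpha=0,\\ 0, & \text{otherwise.}\end{cases} \]
   Context: A conformal algebra over $\Bbbk$ is a $\Bbbk[\partial]$-module $C$ with a bilinear $\lambda$-product $(a\,{}_{\lambda}\,b)=\sum_{n\ge0}\frac{\lambda^n}{n!}(a\,{}_{(n)}\,b)\in C[\lambda]$ (finitely many nonzero $n$-products) satisfying $(\partial a\,{}_\lambda\, b)=-\lambda(a\,{}_\lambda\, b)$ and $(a\,{}_\lambda\,\partial b)=(\partial+\lambda)(a\,{}_\lambda\, b)$; it is associative if $a\,{}_\lambda(b\,{}_\mu c)=(a\,{}_\lambda b)\,{}_{\lambda+\mu} c$. $U(3)$ is the associative conformal algebra generated by one element $v$ subject to the relations $v\,{}_{(n)}\,v=0$ for all $n\ge 3$ and $2\,v\,{}_{(1)}\,v-\partial(v\,{}_{(2)}\,v)=2v$ (equivalently, the universal associative conformal envelope of the Virasoro Lie conformal algebra $[v\,{}_\lambda\, v]=(\partial+2\lambda)v$ in which $v\,{}_{(n)}\,v=0$ for $n\ge3$). A left conformal module over an associative conformal algebra $C$ is a $\Bbbk[\partial]$-module $M$ with a bilinear map $C\otimes M\to M[\lambda]$, $a\otimes m\mapsto a\,{}_\lambda\, m$,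 satisfying $(\partial a)\,{}_\lambda m=-\lambda(a\,{}_\lambda m)$, $a\,{}_\lambda\,\partial m=(\partial+\lambda)(a\,{}_\lambda m)$, $a\,{}_\lambda(b\,{}_\mu m)=(a\,{}_\lambda b)\,{}_{\lambda+\mu}m$. For $\alpha,\Delta\in\Bbbk$, $M_{(\alpha,\Delta)}=\Bbbk[\partial]u$ is the free rank-one $\Bbbk[\partial]$-module with $v\,{}_\lambda\, u=(\alpha+\partial+\Delta\lambda)u$; this is a conformal $U(3)$-module for all $\alpha,\Delta$. Hochschild cohomology: the basic complex $\tilde C^n(C,M)$ ($n\ge1$) consists of maps $\varphi_{\bar\lambda}:C^{\otimes n}\to M[\lambda_1,\dots,\lambda_n]$ with $\varphi_{\bar\lambda}(a_1,\dots,\partial a_i,\dots,a_n)=-\lambda_i\varphi_{\bar\lambda}(a_1,\dots,a_n)$, and $\tilde C^0=M$; the differential is $(d\varphi)_{\bar\lambda}(a_1,\dots,a_{n+1})=a_1\,{}_{\lambda_1}\varphi_{(\lambda_2,\dots,\lambda_{n+1})}(a_2,\dots,a_{n+1})+\sum_{i=1}^n(-1)^i\varphi_{(\lambda_1,\dots,\lambda_i+\lambda_{i+1},\dots,\lambda_{n+1})}(a_1,\dots,a_i\,{}_{\lambda_i}a_{i+1},\dots,a_{n+1})$ (for $n=0$: $(dm)_\lambda(a)=a\,{}_\lambda m$). Each $\tilde C^n$ is a $\Bbbk[\partial]$-module via $(\partial\varphi)_{\bar\lambda}=(\partial+\sum_i\lambda_i)\varphi_{\bar\lambda}$, commuting with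 $d$; $H^n(C,M)$ denotes the cohomology of the reduced Hochschild complex $C^\bullet(C,M)=\tilde C^\bullet(C,M)/\partial\tilde C^\bullet(C,M)$. *)

theory Defs
  imports "HOL-Computational_Algebra.Polynomial"
begin

text \<open>Operations are explicit (not type classes) so that
  several structures on the same type can be compared (universal property).\<close>

record ('k, 'c) conf_alg =
  cadd  :: "'c \<Rightarrow> 'c \<Rightarrow> 'c"
  czero :: "'c"
  cneg  :: "'c \<Rightarrow> 'c"
  csmul :: "'k \<Rightarrow> 'c \<Rightarrow> 'c"
  cder  :: "'c \<Rightarrow> 'c"
  cprod :: "nat \<Rightarrow> 'c \<Rightarrow> 'c \<Rightarrow> 'c"

fun csumn :: "('k, 'c, 'z) conf_alg_scheme \<Rightarrow> (nat \<Rightarrow> 'c) \<Rightarrow> nat \<Rightarrow> 'c" where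
  "csumn C f 0 = czero C"
| "csumn C f (Suc n) = cadd C (csumn C f n) (f n)"

definition kspace :: "('k::field, 'c) conf_alg \<Rightarrow> bool" where
  "kspace C \<longleftrightarrow>
     (\<forall>a b c. cadd C (cadd C a b) c = cadd C a (cadd C b c)) \<and>
     (\<forall>a b. cadd C a b = cadd C b a) \<and>
     (\<forall>a. cadd C (czero C) a = a) \<and>
     (\<forall>a. cadd C (cneg C a) a = czero C) \<and>
     (\<forall>r a b. csmul C r (cadd C a b) = cadd C (csmul C r a) (csmul C r b)) \<and>
     (\<forall>r s a. csmul C (r + s) a = cadd C (csmul C r a) (csmul C s a)) \<and>
     (\<forall>r s a. csmul C (r * s) a = csmul C r (csmul C s a)) \<and>
     (\<forall>a. csmul C 1 a = a)"

text \<open>The lambda-product is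
  (a_\<lambda> b) = \<Sum>_n \<lambda>^n/n! a_(n) b; the identities of the definition are written
  out coefficientwise in \<lambda> (and \<mu>):
  (\<partial>a)_\<lambda> b = -\<lambda>(a_\<lambda> b)         iff  (\<partial>a)_(0) b = 0, (\<partial>a)_(n+1) b = -(n+1) a_(n) b;
  a_\<lambda> \<partial>b = (\<partial>+\<lambda>)(a_\<lambda> b)      iff  a_(n) \<partial>b = \<partial>(a_(n) b) + n a_(n-1) b;
  a_\<lambda>(b_\<mu> c) = (a_\<lambda> b)_{\<lambda>+\<mu>} c  iff  a_(n)(b_(m) c) = \<Sum>_{i\<le>n} (n choose i) (a_(n-i) b)_(m+i) c.\<close>
definition assoc_conf :: "('k::field_char_0, 'c) conf_alg \<Rightarrow> bool" where
  "assoc_conf C \<longleftrightarrow>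
     kspace C \<and>
     \<comment> \<open>k[\<partial>]-module: \<partial> is k-linear\<close>
     (\<forall>a b. cder C (cadd C a b) = cadd C (cder C a) (cder C b)) \<and>
     (\<forall>r a. cder C (csmul C r a) = csmul C r (cder C a)) \<and>
     \<comment> \<open>bilinearity of the n-products\<close>
     (\<forall>n a b c. cprod C n (cadd C a b) c = cadd C (cprod C n a c) (cprod C n b c)) \<and>
     (\<forall>n a b c. cprod C n a (cadd C b c) = cadd C (cprod C n a b) (cprod C n a c)) \<and>
     (\<forall>n r a b. cprod C n (csmul C r a) b = csmul C r (cprod C n a b)) \<and>
     (\<forall>n r a b. cprod C n a (csmul C r b) = csmul C r (cprod C n a b)) \<and>
     \<comment> \<open>locality: finitely many nonzero n-products\<close>
     (\<forall>a b. \<exists>N. \<forall>n\<ge>N. cprod C n a b = czero C) \<and>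
     \<comment> \<open>sesquilinearity\<close>
     (\<forall>a b. cprod C 0 (cder C a) b = czero C) \<and>
     (\<forall>n a b. cprod C (Suc n) (cder C a) b = csmul C (- of_nat (Suc n)) (cprod C n a b)) \<and>
     (\<forall>a b. cprod C 0 a (cder C b) = cder C (cprod C 0 a b)) \<and>
     (\<forall>n a b. cprod C (Suc n) a (cder C b) =
              cadd C (cder C (cprod C (Suc n) a b)) (csmul C (of_nat (Suc n)) (cprod C n a b))) \<and>
     \<comment> \<open>associativity\<close>
     (\<forall>n m a b c. cprod C n a (cprod C m b c) =
        csumn C (\<lambda>i. csmul C (of_nat (n choose i)) (cprod C (m + i) (cprod C (n - i) a b) c)) (Suc n))"

definition conf_hom :: "('k, 'c) conf_alg \<Rightarrow> ('k, 'c) conf_alg \<Rightarrow> ('c \<Rightarrow> 'c) \<Rightarrow> bool" where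
  "conf_hom C A f \<longleftrightarrow>
     (\<forall>a b. f (cadd C a b) = cadd A (f a) (f b)) \<and>
     (\<forall>r a. f (csmul C r a) = csmul A r (f a)) \<and>
     (\<forall>a. f (cder C a) = cder A (f a)) \<and>
     (\<forall>n a b. f (cprod C n a b) = cprod A n (f a) (f b))"

definition U3_rels :: "('k::field_char_0, 'c) conf_alg \<Rightarrow> 'c \<Rightarrow> bool" where
  "U3_rels A w \<longleftrightarrow>
     (\<forall>n\<ge>3. cprod A n w w = czero A) \<and>
     cadd A (csmul A 2 (cprod A 1 w w)) (cneg A (cder A (cprod A 2 w w))) = csmul A 2 w"

definition conf_generates :: "('k, 'c) conf_alg \<Rightarrow> 'c \<Rightarrow> bool" where
  "conf_generates C v \<longleftrightarrow>
     (\<forall>S. v \<in> S \<and> czero C \<in> S \<and>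
          (\<forall>a\<in>S. \<forall>b\<in>S. cadd C a b \<in> S) \<and>
          (\<forall>r. \<forall>a\<in>S. csmul C r a \<in> S) \<and>
          (\<forall>a\<in>S. cder C a \<in> S) \<and>
          (\<forall>n. \<forall>a\<in>S. \<forall>b\<in>S. cprod C n a b \<in> S) \<longrightarrow> S = UNIV)"

text \<open>(C, v) is (a copy of) U(3): an associative conformal algebra generated by v,
  satisfying the relations, universal among associative conformal algebras
  (on the same carrier type) with an element satisfying the relations.\<close>
definition is_U3 :: "('k::field_char_0, 'c) conf_alg \<Rightarrow> 'c \<Rightarrow> bool" where
  "is_U3 C v \<longleftrightarrow>
     assoc_conf C \<and> U3_rels C v \<and> conf_generates C v \<and> v \<noteq> czero C \<and>
     (\<forall>(A::('k, 'c) conf_alg) w. assoc_conf A \<and> U3_rels A w \<longrightarrow>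
        (\<exists>!f. conf_hom C A f \<and> f v = w))"

text \<open>M = k[\<partial>]u is identified with k[\<partial>]; M[\<lambda>_1,...,\<lambda>_n] = k[\<partial>,\<lambda>_1,...,\<lambda>_n] is represented
  by polynomial functions (k is infinite), the first argument being \<partial>.\<close>

definition poly1 :: "('k::comm_ring_1 \<Rightarrow> 'k) \<Rightarrow> bool" where
  "poly1 m \<longleftrightarrow> (\<exists>p::'k poly. \<forall>x. m x = poly p x)"

definition poly2 :: "('k::comm_ring_1 \<Rightarrow> 'k \<Rightarrow> 'k) \<Rightarrow> bool" where
  "poly2 f \<longleftrightarrow> (\<exists>p::'k poly poly. \<forall>x l. f x l = poly (poly p [:l:]) x)"

definition poly3 :: "('k::comm_ring_1 \<Rightarrow> 'k \<Rightarrow> 'k \<Rightarrow> 'k) \<Rightarrow> bool" where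
  "poly3 f \<longleftrightarrow> (\<exists>p::'k poly poly poly. \<forall>x l1 l2.
      f x l1 l2 = poly (poly (poly p [:[:l2:]:]) [:l1:]) x)"

definition loc_bound :: "('k, 'c) conf_alg \<Rightarrow> 'c \<Rightarrow> 'c \<Rightarrow> nat" where
  "loc_bound C a b = (LEAST N. \<forall>n\<ge>N. cprod C n a b = czero C)"

text \<open>act a m x l is the value of (a_\<lambda> m) \<in> M[\<lambda>] at \<partial> = x, \<lambda> = l.\<close>
definition conf_module ::
  "('k::field_char_0, 'c) conf_alg \<Rightarrow> ('c \<Rightarrow> ('k \<Rightarrow> 'k) \<Rightarrow> 'k \<Rightarrow> 'k \<Rightarrow> 'k) \<Rightarrow> bool" where
  "conf_module C act \<longleftrightarrow>
     (\<forall>a m. poly1 m \<longrightarrow> poly2 (act a m)) \<and>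
     (\<forall>a b m x l. poly1 m \<longrightarrow> act (cadd C a b) m x l = act a m x l + act b m x l) \<and>
     (\<forall>r a m x l. poly1 m \<longrightarrow> act (csmul C r a) m x l = r * act a m x l) \<and>
     (\<forall>a m m' x l. poly1 m \<longrightarrow> poly1 m' \<longrightarrow>
        act a (\<lambda>y. m y + m' y) x l = act a m x l + act a m' x l) \<and>
     (\<forall>r a m x l. poly1 m \<longrightarrow> act a (\<lambda>y. r * m y) x l = r * act a m x l) \<and>
     \<comment> \<open>(\<partial>a)_\<lambda> m = -\<lambda>(a_\<lambda> m)\<close>
     (\<forall>a m x l. poly1 m \<longrightarrow> act (cder C a) m x l = - l * act a m x l) \<and>
     \<comment> \<open>a_\<lambda> \<partial>m = (\<partial>+\<lambda>)(a_\<lambda> m)\<close>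
     (\<forall>a m x l. poly1 m \<longrightarrow> act a (\<lambda>y. y * m y) x l = (x + l) * act a m x l) \<and>
     \<comment> \<open>a_\<lambda>(b_\<mu> m) = (a_\<lambda> b)_{\<lambda>+\<mu>} m\<close>
     (\<forall>a b m x l1 l2 N. poly1 m \<longrightarrow> (\<forall>n\<ge>N. cprod C n a b = czero C) \<longrightarrow>
        act a (\<lambda>y. act b m y l2) x l1 =
        (\<Sum>n<N. l1 ^ n / fact n * act (cprod C n a b) m x (l1 + l2)))"

text \<open>1-cochains \<phi>_\<lambda> : C \<rightarrow> M[\<lambda>]; \<phi> a x l = value at \<partial> = x, \<lambda> = l.\<close>
definition cochain1 :: "('k::field_char_0, 'c) conf_alg \<Rightarrow> ('c \<Rightarrow> 'k \<Rightarrow> 'k \<Rightarrow> 'k) \<Rightarrow> bool" where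
  "cochain1 C \<phi> \<longleftrightarrow>
     (\<forall>a. poly2 (\<phi> a)) \<and>
     (\<forall>a b x l. \<phi> (cadd C a b) x l = \<phi> a x l + \<phi> b x l) \<and>
     (\<forall>r a x l. \<phi> (csmul C r a) x l = r * \<phi> a x l) \<and>
     (\<forall>a x l. \<phi> (cder C a) x l = - l * \<phi> a x l)"

definition cochain2 ::
  "('k::field_char_0, 'c) conf_alg \<Rightarrow> ('c \<Rightarrow> 'c \<Rightarrow> 'k \<Rightarrow> 'k \<Rightarrow> 'k \<Rightarrow> 'k) \<Rightarrow> bool" where
  "cochain2 C \<psi> \<longleftrightarrow>
     (\<forall>a b. poly3 (\<psi> a b)) \<and>
     (\<forall>a a' b x l1 l2. \<psi> (cadd C a a') b x l1 l2 = \<psi> a b x l1 l2 + \<psi> a' b x l1 l2) \<and>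
     (\<forall>a b b' x l1 l2. \<psi> a (cadd C b b') x l1 l2 = \<psi> a b x l1 l2 + \<psi> a b' x l1 l2) \<and>
     (\<forall>r a b x l1 l2. \<psi> (csmul C r a) b x l1 l2 = r * \<psi> a b x l1 l2) \<and>
     (\<forall>r a b x l1 l2. \<psi> a (csmul C r b) x l1 l2 = r * \<psi> a b x l1 l2) \<and>
     (\<forall>a b x l1 l2. \<psi> (cder C a) b x l1 l2 = - l1 * \<psi> a b x l1 l2) \<and>
     (\<forall>a b x l1 l2. \<psi> a (cder C b) x l1 l2 = - l2 * \<psi> a b x l1 l2)"

definition hd0 :: "('c \<Rightarrow> ('k \<Rightarrow> 'k) \<Rightarrow> 'k \<Rightarrow> 'k \<Rightarrow> 'k) \<Rightarrow> ('k \<Rightarrow> 'k) \<Rightarrow> 'c \<Rightarrow> 'k \<Rightarrow> 'k \<Rightarrow> 'k" where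
  "hd0 act m = (\<lambda>a x l. act a m x l)"

definition hd1 ::
  "('k::field_char_0, 'c) conf_alg \<Rightarrow> ('c \<Rightarrow> ('k \<Rightarrow> 'k) \<Rightarrow> 'k \<Rightarrow> 'k \<Rightarrow> 'k) \<Rightarrow>
   ('c \<Rightarrow> 'k \<Rightarrow> 'k \<Rightarrow> 'k) \<Rightarrow> 'c \<Rightarrow> 'c \<Rightarrow> 'k \<Rightarrow> 'k \<Rightarrow> 'k \<Rightarrow> 'k" where
  "hd1 C act \<phi> = (\<lambda>a b x l1 l2.
      act a (\<lambda>y. \<phi> b y l2) x l1
      - (\<Sum>n<loc_bound C a b. l1 ^ n / fact n * \<phi> (cprod C n a b) x (l1 + l2)))"

text \<open>Cocycles of the reduced complex in degree 1: d\<phi> \<in> \<partial> C~^2, where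
  (\<partial>\<chi>)_{\<lambda>1,\<lambda>2} = (\<partial>+\<lambda>1+\<lambda>2)\<chi>_{\<lambda>1,\<lambda>2}.\<close>
definition Z1 :: "('k::field_char_0, 'c) conf_alg \<Rightarrow> ('c \<Rightarrow> ('k \<Rightarrow> 'k) \<Rightarrow> 'k \<Rightarrow> 'k \<Rightarrow> 'k) \<Rightarrow>
   ('c \<Rightarrow> 'k \<Rightarrow> 'k \<Rightarrow> 'k) set" where
  "Z1 C act = {\<phi>. cochain1 C \<phi> \<and>
      (\<exists>\<chi>. cochain2 C \<chi> \<and>
         (\<forall>a b x l1 l2. hd1 C act \<phi> a b x l1 l2 = (x + l1 + l2) * \<chi> a b x l1 l2))}"

text \<open>Coboundaries of the reduced complex in degree 1 (as representatives in C~^1):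
  d(M) + \<partial> C~^1, where (\<partial>\<psi>)_\<lambda> = (\<partial>+\<lambda>)\<psi>_\<lambda>.\<close>
definition B1 :: "('k::field_char_0, 'c) conf_alg \<Rightarrow> ('c \<Rightarrow> ('k \<Rightarrow> 'k) \<Rightarrow> 'k \<Rightarrow> 'k \<Rightarrow> 'k) \<Rightarrow>
   ('c \<Rightarrow> 'k \<Rightarrow> 'k \<Rightarrow> 'k) set" where
  "B1 C act = {\<phi>. \<exists>m \<psi>. poly1 m \<and> cochain1 C \<psi> \<and>
      (\<forall>a x l. \<phi> a x l = hd0 act m a x l + (x + l) * \<psi> a x l)}"

definition quot_dim_eq :: "('c \<Rightarrow> 'k::field \<Rightarrow> 'k \<Rightarrow> 'k) set \<Rightarrow> ('c \<Rightarrow> 'k \<Rightarrow> 'k \<Rightarrow> 'k) set \<Rightarrow> nat \<Rightarrow> bool" where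
  "quot_dim_eq Z B n \<longleftrightarrow>
     (\<exists>S. finite S \<and> card S = n \<and> S \<subseteq> Z \<and>
        (\<forall>c. (\<lambda>a x l. \<Sum>s\<in>S. c s * s a x l) \<in> B \<longrightarrow> (\<forall>s\<in>S. c s = 0)) \<and>
        (\<forall>\<phi>\<in>Z. \<exists>c. (\<lambda>a x l. \<phi> a x l - (\<Sum>s\<in>S. c s * s a x l)) \<in> B))"

definition H1_dim_eq :: "('k::field_char_0, 'c) conf_alg \<Rightarrow> ('c \<Rightarrow> ('k \<Rightarrow> 'k) \<Rightarrow> 'k \<Rightarrow> 'k \<Rightarrow> 'k) \<Rightarrow> nat \<Rightarrow> bool" where
  "H1_dim_eq C act n \<longleftrightarrow> quot_dim_eq (Z1 C act) (B1 C act) n"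

end

theory Submission
  imports Defs
begin


section \<open>Vector space lemmas\<close>

lemma ks_ax:
  assumes "kspace C"
  shows "cadd C (cadd C a b) c = cadd C a (cadd C b c)"
    "cadd C a b = cadd C b a"
    "cadd C (czero C) a = a"
    "cadd C (cneg C a) a = czero C"
    "csmul C r (cadd C a b) = cadd C (csmul C r a) (csmul C r b)"
    "csmul C (r + s) a = cadd C (csmul C r a) (csmul C s a)"
    "csmul C (r * s) a = csmul C r (csmul C s a)"
    "csmul C 1 a = a"
  using assms unfolding kspace_def by blast+

lemma ks_zero_right: "kspace C \<Longrightarrow> cadd C a (czero C) = a"
  by (metis ks_ax(2,3))

lemma ks_cancel:
  assumes "kspace C" "cadd C a b = cadd C a c" shows "b = c"
proof -
  have "cadd C (cneg C a) (cadd C a b) = cadd C (cneg C a) (cadd C a c)" using assms(2) by simp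
  thus ?thesis by (metis assms(1) ks_ax(1,3,4))
qed

lemma ks_idem_zero:
  assumes "kspace C" "cadd C a a = a" shows "a = czero C"
  using ks_cancel[OF assms(1), of a a "czero C"] assms ks_zero_right by metis

lemma ks_smul_zero: "kspace C \<Longrightarrow> csmul C r (czero C) = czero C"
  by (metis ks_ax(3,5) ks_idem_zero)

lemma ks_zero_smul: "kspace C \<Longrightarrow> csmul C 0 a = czero C"
  by (metis add_0 ks_ax(6) ks_idem_zero)

lemma ks_smul_inj:
  assumes "kspace C" "v \<noteq> czero C" "csmul C r v = csmul C s v" shows "r = s"
proof (rule ccontr)
  assume ne: "r \<noteq> s"
  have "csmul C r v = cadd C (csmul C (r - s) v) (csmul C s v)"
    using ks_ax(6)[OF assms(1), of "r - s" s v] by simp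
  hence "cadd C (csmul C s v) (csmul C (r - s) v) = cadd C (csmul C s v) (czero C)"
    using assms(3) by (metis assms(1) ks_ax(2) ks_zero_right)
  hence z: "csmul C (r - s) v = czero C" using ks_cancel[OF assms(1)] by blast
  have "v = csmul C (inverse (r - s) * (r - s)) v" using ne by (simp add: ks_ax(8)[OF assms(1)])
  also have "\<dots> = czero C" using z by (simp add: ks_ax(7)[OF assms(1)] ks_smul_zero[OF assms(1)])
  finally show False using assms(2) by simp
qed

section \<open>Polynomial functions\<close>

lemma poly1_poly: "poly1 (poly p)" unfolding poly1_def by blast
lemma poly1_const: "poly1 (\<lambda>x. c)" unfolding poly1_def by (rule exI[of _ "[:c:]"]) simp
lemma poly1_id: "poly1 (\<lambda>x. x)" unfolding poly1_def by (rule exI[of _ "[:0,1:]"]) simp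
lemma poly1_add: "poly1 f \<Longrightarrow> poly1 g \<Longrightarrow> poly1 (\<lambda>x. f x + g x)"
  unfolding poly1_def apply (elim exE) subgoal for p q by (rule exI[of _ "p + q"]) simp done
lemma poly1_mult: "poly1 f \<Longrightarrow> poly1 g \<Longrightarrow> poly1 (\<lambda>x. f x * g x)"
  unfolding poly1_def apply (elim exE) subgoal for p q by (rule exI[of _ "p * q"]) simp done
lemma poly1_minus: "poly1 f \<Longrightarrow> poly1 (\<lambda>x. - f x)"
  unfolding poly1_def apply (elim exE) subgoal for p by (rule exI[of _ "- p"]) simp done
lemma poly1_diff: "poly1 f \<Longrightarrow> poly1 g \<Longrightarrow> poly1 (\<lambda>x. f x - g x)"
  using poly1_add[OF _ poly1_minus] by simp
lemma poly1_pow: "poly1 f \<Longrightarrow> poly1 (\<lambda>x. f x ^ n)"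
  by (induction n) (auto intro: poly1_const poly1_mult)
lemma poly1_sum: "(\<And>i. i \<in> A \<Longrightarrow> poly1 (f i)) \<Longrightarrow> poly1 (\<lambda>x. \<Sum>i\<in>A. f i x)"
proof (induction A rule: infinite_finite_induct)
  case (infinite A) thus ?case by (simp add: poly1_const)
next
  case empty thus ?case by (simp add: poly1_const)
next
  case (insert a A) thus ?case by (simp add: poly1_add)
qed
lemma poly1_comp_poly: "poly1 g \<Longrightarrow> poly1 (\<lambda>x. poly p (g x))"
  by (induction p) (auto intro: poly1_const poly1_mult poly1_add)
lemma poly1_comp: "poly1 f \<Longrightarrow> poly1 g \<Longrightarrow> poly1 (\<lambda>x. f (g x))"
proof -
  assume "poly1 f" "poly1 g"
  then obtain p where "\<And>x. f x = poly p x" unfolding poly1_def by blast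
  thus ?thesis using poly1_comp_poly[OF \<open>poly1 g\<close>, of p] by simp
qed
lemmas poly1_intros = poly1_poly poly1_const poly1_id poly1_add poly1_mult poly1_minus poly1_diff
  poly1_pow poly1_sum

lemma poly2_const: "poly2 (\<lambda>x l. c)" unfolding poly2_def by (rule exI[of _ "[:[:c:]:]"]) simp
lemma poly2_x: "poly2 (\<lambda>x l. x)" unfolding poly2_def by (rule exI[of _ "[:[:0,1:]:]"]) simp
lemma poly2_l: "poly2 (\<lambda>x l. l)" unfolding poly2_def by (rule exI[of _ "[:0,1:]"]) simp
lemma poly2_add: "poly2 f \<Longrightarrow> poly2 g \<Longrightarrow> poly2 (\<lambda>x l. f x l + g x l)"
  unfolding poly2_def apply (elim exE) subgoal for p q by (rule exI[of _ "p + q"]) simp done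
lemma poly2_mult: "poly2 f \<Longrightarrow> poly2 g \<Longrightarrow> poly2 (\<lambda>x l. f x l * g x l)"
  unfolding poly2_def apply (elim exE) subgoal for p q by (rule exI[of _ "p * q"]) simp done
lemma poly2_minus: "poly2 f \<Longrightarrow> poly2 (\<lambda>x l. - f x l)"
  unfolding poly2_def apply (elim exE) subgoal for p by (rule exI[of _ "- p"]) simp done
lemma poly2_diff: "poly2 f \<Longrightarrow> poly2 g \<Longrightarrow> poly2 (\<lambda>x l. f x l - g x l)"
  using poly2_add[OF _ poly2_minus] by simp
lemma poly2_pow: "poly2 f \<Longrightarrow> poly2 (\<lambda>x l. f x l ^ n)"
  by (induction n) (auto intro: poly2_const poly2_mult)
lemma poly2_sum: "(\<And>i. i \<in> A \<Longrightarrow> poly2 (f i)) \<Longrightarrow> poly2 (\<lambda>x l. \<Sum>i\<in>A. f i x l)"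
proof (induction A rule: infinite_finite_induct)
  case (infinite A) thus ?case by (simp add: poly2_const)
next
  case empty thus ?case by (simp add: poly2_const)
next
  case (insert a A) thus ?case by (simp add: poly2_add)
qed
lemma poly2_comp_poly: "poly2 g \<Longrightarrow> poly2 (\<lambda>x l. poly p (g x l))"
  by (induction p) (auto intro: poly2_const poly2_mult poly2_add)
lemma poly2_comp: "poly1 f \<Longrightarrow> poly2 g \<Longrightarrow> poly2 (\<lambda>x l. f (g x l))"
proof -
  assume "poly1 f" "poly2 g"
  then obtain p where "\<And>x. f x = poly p x" unfolding poly1_def by blast
  thus ?thesis using poly2_comp_poly[OF \<open>poly2 g\<close>, of p] by simp
qed
lemmas poly2_intros = poly2_const poly2_x poly2_l poly2_add poly2_mult poly2_minus poly2_diff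
  poly2_pow poly2_sum

lemma poly3_const: "poly3 (\<lambda>x l1 l2. c)" unfolding poly3_def by (rule exI[of _ "[:[:[:c:]:]:]"]) simp
lemma poly3_x: "poly3 (\<lambda>x l1 l2. x)" unfolding poly3_def by (rule exI[of _ "[:[:[:0,1:]:]:]"]) simp
lemma poly3_l1: "poly3 (\<lambda>x l1 l2. l1)" unfolding poly3_def by (rule exI[of _ "[:[:0,1:]:]"]) simp
lemma poly3_l2: "poly3 (\<lambda>x l1 l2. l2)" unfolding poly3_def by (rule exI[of _ "[:0,1:]"]) simp
lemma poly3_add: "poly3 f \<Longrightarrow> poly3 g \<Longrightarrow> poly3 (\<lambda>x l1 l2. f x l1 l2 + g x l1 l2)"
  unfolding poly3_def apply (elim exE) subgoal for p q by (rule exI[of _ "p + q"]) simp done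
lemma poly3_mult: "poly3 f \<Longrightarrow> poly3 g \<Longrightarrow> poly3 (\<lambda>x l1 l2. f x l1 l2 * g x l1 l2)"
  unfolding poly3_def apply (elim exE) subgoal for p q by (rule exI[of _ "p * q"]) simp done
lemma poly3_minus: "poly3 f \<Longrightarrow> poly3 (\<lambda>x l1 l2. - f x l1 l2)"
  unfolding poly3_def apply (elim exE) subgoal for p by (rule exI[of _ "- p"]) simp done
lemma poly3_diff: "poly3 f \<Longrightarrow> poly3 g \<Longrightarrow> poly3 (\<lambda>x l1 l2. f x l1 l2 - g x l1 l2)"
  using poly3_add[OF _ poly3_minus] by simp
lemma poly3_pow: "poly3 f \<Longrightarrow> poly3 (\<lambda>x l1 l2. f x l1 l2 ^ n)"
  by (induction n) (auto intro: poly3_const poly3_mult)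
lemma poly3_sum: "(\<And>i. i \<in> A \<Longrightarrow> poly3 (f i)) \<Longrightarrow> poly3 (\<lambda>x l1 l2. \<Sum>i\<in>A. f i x l1 l2)"
proof (induction A rule: infinite_finite_induct)
  case (infinite A) thus ?case by (simp add: poly3_const)
next
  case empty thus ?case by (simp add: poly3_const)
next
  case (insert a A) thus ?case by (simp add: poly3_add)
qed
lemma poly3_comp_poly: "poly3 g \<Longrightarrow> poly3 (\<lambda>x l1 l2. poly p (g x l1 l2))"
  by (induction p) (auto intro: poly3_const poly3_mult poly3_add)
lemma poly3_comp: "poly1 f \<Longrightarrow> poly3 g \<Longrightarrow> poly3 (\<lambda>x l1 l2. f (g x l1 l2))"
proof -
  assume "poly1 f" "poly3 g"
  then obtain p where "\<And>x. f x = poly p x" unfolding poly1_def by blast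
  thus ?thesis using poly3_comp_poly[OF \<open>poly3 g\<close>, of p] by simp
qed
lemmas poly3_intros = poly3_const poly3_x poly3_l1 poly3_l2 poly3_add poly3_mult poly3_minus
  poly3_diff poly3_pow poly3_sum

lemma poly2_fix_l: "poly2 f \<Longrightarrow> poly1 (\<lambda>x. f x l)"
  unfolding poly2_def poly1_def by blast
lemma poly3_fix: "poly3 f \<Longrightarrow> poly1 (\<lambda>x. f x l1 l2)"
  unfolding poly3_def poly1_def by blast

lemma poly_sum_lt:
  fixes p :: "'a::comm_semiring_1 poly"
  assumes "degree p < d" shows "poly p x = (\<Sum>i<d. coeff p i * x ^ i)"
proof -
  have "poly p x = (\<Sum>i\<le>degree p. coeff p i * x ^ i)" by (simp add: poly_altdef)
  also have "\<dots> = (\<Sum>i<d. coeff p i * x ^ i)"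
    by (rule sum.mono_neutral_left) (use assms in \<open>auto simp: coeff_eq_0\<close>)
  finally show ?thesis .
qed

lemma poly2_msum:
  assumes "poly2 f"
  shows "\<exists>c d. \<forall>x l. f x l = (\<Sum>i<d. \<Sum>j<d. c i j * x ^ i * l ^ j)"
proof -
  obtain P where P: "\<And>x l. f x l = poly (poly P [:l:]) x" using assms unfolding poly2_def by blast
  define d where "d = Suc (degree P + (\<Sum>j\<le>degree P. degree (coeff P j)))"
  have dj: "degree (coeff P j) < d" for j
  proof (cases "j \<le> degree P")
    case True
    hence "degree (coeff P j) \<le> (\<Sum>j\<le>degree P. degree (coeff P j))"
      by (intro member_le_sum) auto
    thus ?thesis unfolding d_def by simp
  next
    case False thus ?thesis by (simp add: coeff_eq_0 d_def)
  qed
  have dP: "degree P < d" unfolding d_def by simp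
  have "f x l = (\<Sum>i<d. \<Sum>j<d. coeff (coeff P j) i * x ^ i * l ^ j)" for x l
  proof -
    have "poly P [:l:] = (\<Sum>j<d. coeff P j * [:l:] ^ j)" by (rule poly_sum_lt[OF dP])
    hence "f x l = (\<Sum>j<d. poly (coeff P j) x * l ^ j)"
      by (simp add: P poly_sum poly_power)
    also have "\<dots> = (\<Sum>j<d. \<Sum>i<d. coeff (coeff P j) i * x ^ i * l ^ j)"
      by (simp add: poly_sum_lt[OF dj] sum_distrib_right)
    also have "\<dots> = (\<Sum>i<d. \<Sum>j<d. coeff (coeff P j) i * x ^ i * l ^ j)"
      by (rule sum.swap)
    finally show ?thesis .
  qed
  thus ?thesis by (intro exI[of _ "\<lambda>i j. coeff (coeff P j) i"] exI[of _ d]) blast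
qed

lemma poly2_fix_x: "poly2 f \<Longrightarrow> poly1 (\<lambda>l. f x l)"
proof -
  assume "poly2 f"
  then obtain c d where "\<forall>x l. f x l = (\<Sum>i<d. \<Sum>j<d. c i j * x ^ i * l ^ j)"
    using poly2_msum by blast
  thus ?thesis by (simp, intro poly1_intros)
qed

lemma poly2_diag: "poly2 f \<Longrightarrow> poly1 (\<lambda>t. f (- t) t)"
proof -
  assume "poly2 f"
  then obtain c d where "\<forall>x l. f x l = (\<Sum>i<d. \<Sum>j<d. c i j * x ^ i * l ^ j)"
    using poly2_msum by blast
  thus ?thesis by (simp, intro poly1_intros)
qed

lemma poly1_off_point:
  fixes g h :: "'k::field_char_0 \<Rightarrow> 'k"
  assumes "poly1 g" "poly1 h" "\<And>x. x \<noteq> y \<Longrightarrow> g x = h x"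
  shows "g y = h y"
proof -
  obtain p q where p: "\<And>x. g x = poly p x" and q: "\<And>x. h x = poly q x"
    using assms(1,2) unfolding poly1_def by blast
  have "p - q = 0"
  proof (rule ccontr)
    assume "p - q \<noteq> 0"
    hence "finite {x. poly (p - q) x = 0}" by (rule poly_roots_finite)
    moreover have "UNIV - {y} \<subseteq> {x. poly (p - q) x = 0}" using assms(3) p q by auto
    ultimately have "finite (UNIV - {y} :: 'k set)" by (rule finite_subset[rotated])
    hence "finite (UNIV :: 'k set)" by simp
    thus False using infinite_UNIV_char_0 by blast
  qed
  thus ?thesis using p q by simp
qed

lemma coeffs_zero:
  fixes c :: "nat \<Rightarrow> 'k::field_char_0"
  assumes "\<And>x. (\<Sum>n<N. c n * x ^ n) = 0" "n < N"
  shows "c n = 0"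
proof -
  define p where "p = (\<Sum>n<N. monom (c n) n)"
  have "\<forall>x. poly p x = 0" using assms(1) by (simp add: p_def poly_sum poly_monom)
  hence "p = 0" using poly_all_0_iff_0 by blast
  hence "coeff p n = 0" by simp
  moreover have "coeff p n = c n" using assms(2) by (simp add: p_def coeff_sum)
  ultimately show ?thesis by simp
qed

lemma coeffs_eq:
  fixes c d :: "nat \<Rightarrow> 'k::field_char_0"
  assumes "\<And>x. (\<Sum>n<N. c n * x ^ n) = (\<Sum>n<N. d n * x ^ n)" "n < N"
  shows "c n = d n"
proof -
  have "(\<Sum>n<N. (c n - d n) * x ^ n) = 0" for x
    using assms(1)[of x] by (simp add: left_diff_distrib sum_subtractf)
  from coeffs_zero[OF this assms(2)] show ?thesis by simp
qed

lemma coeffs_eq2: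
  fixes c d :: "nat \<Rightarrow> nat \<Rightarrow> 'k::field_char_0"
  assumes "\<And>x y. (\<Sum>j<N. \<Sum>i<N. c i j * x ^ i * y ^ j) = (\<Sum>j<N. \<Sum>i<N. d i j * x ^ i * y ^ j)"
    "i < N" "j < N"
  shows "c i j = d i j"
proof -
  have sw: "(\<Sum>j<N. \<Sum>i<N. e i j * x ^ i * y ^ j) = (\<Sum>i<N. (\<Sum>j<N. e i j * y ^ j) * x ^ i)"
    for e :: "nat \<Rightarrow> nat \<Rightarrow> 'k" and x y
  proof -
    have "(\<Sum>j<N. \<Sum>i<N. e i j * x ^ i * y ^ j) = (\<Sum>i<N. \<Sum>j<N. e i j * x ^ i * y ^ j)"
      by (rule sum.swap)
    also have "\<dots> = (\<Sum>i<N. (\<Sum>j<N. e i j * y ^ j) * x ^ i)"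
      unfolding sum_distrib_right by (intro sum.cong refl) (simp add: mult_ac)
    finally show ?thesis .
  qed
  have "\<And>y. (\<Sum>j<N. c i j * y ^ j) = (\<Sum>j<N. d i j * y ^ j)"
  proof -
    fix y
    show "(\<Sum>j<N. c i j * y ^ j) = (\<Sum>j<N. d i j * y ^ j)"
      by (rule coeffs_eq[where c="\<lambda>i. \<Sum>j<N. c i j * y ^ j" and d="\<lambda>i. \<Sum>j<N. d i j * y ^ j",
            OF _ assms(2)]) (simp only: sw[symmetric] assms(1))
  qed
  thus ?thesis by (rule coeffs_eq[OF _ assms(3)])
qed



lemma ac_ax:
  assumes "assoc_conf C"
  shows "kspace C"
  "cder C (cadd C a b) = cadd C (cder C a) (cder C b)"
  "cder C (csmul C r a) = csmul C r (cder C a)"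
  "cprod C n (cadd C a b) c = cadd C (cprod C n a c) (cprod C n b c)"
  "cprod C n a (cadd C b c) = cadd C (cprod C n a b) (cprod C n a c)"
  "cprod C n (csmul C r a) b = csmul C r (cprod C n a b)"
  "cprod C n a (csmul C r b) = csmul C r (cprod C n a b)"
  "\<exists>N. \<forall>n\<ge>N. cprod C n a b = czero C"
  "cprod C 0 (cder C a) b = czero C"
  "cprod C (Suc n) (cder C a) b = csmul C (- of_nat (Suc n)) (cprod C n a b)"
  "cprod C 0 a (cder C b) = cder C (cprod C 0 a b)"
  "cprod C (Suc n) a (cder C b) =
     cadd C (cder C (cprod C (Suc n) a b)) (csmul C (of_nat (Suc n)) (cprod C n a b))"
  "cprod C n a (cprod C m b c) =
     csumn C (\<lambda>i. csmul C (of_nat (n choose i)) (cprod C (m + i) (cprod C (n - i) a b) c)) (Suc n)"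
  apply (rule assms[unfolded assoc_conf_def, THEN conjunct1, rule_format])
  apply (rule assms[unfolded assoc_conf_def, THEN conjunct2, THEN conjunct1, rule_format])
  apply (rule assms[unfolded assoc_conf_def, THEN conjunct2, THEN conjunct2, THEN conjunct1, rule_format])
  apply (rule assms[unfolded assoc_conf_def, THEN conjunct2, THEN conjunct2, THEN conjunct2, THEN conjunct1, rule_format])
  apply (rule assms[unfolded assoc_conf_def, THEN conjunct2, THEN conjunct2, THEN conjunct2, THEN conjunct2, THEN conjunct1, rule_format])
  apply (rule assms[unfolded assoc_conf_def, THEN conjunct2, THEN conjunct2, THEN conjunct2, THEN conjunct2, THEN conjunct2, THEN conjunct1, rule_format])
  apply (rule assms[unfolded assoc_conf_def, THEN conjunct2, THEN conjunct2, THEN conjunct2, THEN conjunct2, THEN conjunct2, THEN conjunct2, THEN conjunct1, rule_format])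
  apply (rule assms[unfolded assoc_conf_def, THEN conjunct2, THEN conjunct2, THEN conjunct2, THEN conjunct2, THEN conjunct2, THEN conjunct2, THEN conjunct2, THEN conjunct1, rule_format])
  apply (rule assms[unfolded assoc_conf_def, THEN conjunct2, THEN conjunct2, THEN conjunct2, THEN conjunct2, THEN conjunct2, THEN conjunct2, THEN conjunct2, THEN conjunct2, THEN conjunct1, rule_format])
  apply (rule assms[unfolded assoc_conf_def, THEN conjunct2, THEN conjunct2, THEN conjunct2, THEN conjunct2, THEN conjunct2, THEN conjunct2, THEN conjunct2, THEN conjunct2, THEN conjunct2, THEN conjunct1, rule_format])
  apply (rule assms[unfolded assoc_conf_def, THEN conjunct2, THEN conjunct2, THEN conjunct2, THEN conjunct2, THEN conjunct2, THEN conjunct2, THEN conjunct2, THEN conjunct2, THEN conjunct2, THEN conjunct2, THEN conjunct1, rule_format])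
  apply (rule assms[unfolded assoc_conf_def, THEN conjunct2, THEN conjunct2, THEN conjunct2, THEN conjunct2, THEN conjunct2, THEN conjunct2, THEN conjunct2, THEN conjunct2, THEN conjunct2, THEN conjunct2, THEN conjunct2, THEN conjunct1, rule_format])
  apply (rule assms[unfolded assoc_conf_def, THEN conjunct2, THEN conjunct2, THEN conjunct2, THEN conjunct2, THEN conjunct2, THEN conjunct2, THEN conjunct2, THEN conjunct2, THEN conjunct2, THEN conjunct2, THEN conjunct2, THEN conjunct2, rule_format])
  done

lemma lb_zero:
  assumes "assoc_conf C" "loc_bound C a b \<le> n" shows "cprod C n a b = czero C"
proof -
  have "\<forall>n\<ge>loc_bound C a b. cprod C n a b = czero C"
    unfolding loc_bound_def by (rule LeastI_ex) (rule ac_ax(8)[OF assms(1)])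
  thus ?thesis using assms(2) by blast
qed

lemma lb_le:
  assumes "\<forall>n\<ge>N. cprod C n a b = czero C" shows "loc_bound C a b \<le> N"
  unfolding loc_bound_def by (rule Least_le) (rule assms)

lemma sum_extend:
  fixes M N :: nat
  assumes "\<And>n. M \<le> n \<Longrightarrow> f n = 0" "M \<le> N"
  shows "(\<Sum>n<N. f n) = (\<Sum>n<M. f n)"
proof (rule sum.mono_neutral_right)
  show "{..<M} \<subseteq> {..<N}" using assms(2) by auto
  show "\<forall>i\<in>{..<N} - {..<M}. f i = 0" using assms(1) by auto
qed simp

lemma cprod_zero_right: "assoc_conf C \<Longrightarrow> cprod C n a (czero C) = czero C"
  by (metis ac_ax(1,5) ks_ax(3) ks_idem_zero)
lemma cprod_zero_left: "assoc_conf C \<Longrightarrow> cprod C n (czero C) b = czero C"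
  by (metis ac_ax(1,4) ks_ax(3) ks_idem_zero)

section \<open>Modules\<close>

lemma cm_ax:
  assumes "conf_module C act"
  shows "poly1 m \<Longrightarrow> poly2 (act a m)"
  "poly1 m \<Longrightarrow> act (cadd C a b) m x l = act a m x l + act b m x l"
  "poly1 m \<Longrightarrow> act (csmul C r a) m x l = r * act a m x l"
  "poly1 m \<Longrightarrow> poly1 m' \<Longrightarrow> act a (\<lambda>y. m y + m' y) x l = act a m x l + act a m' x l"
  "poly1 m \<Longrightarrow> act a (\<lambda>y. r * m y) x l = r * act a m x l"
  "poly1 m \<Longrightarrow> act (cder C a) m x l = - l * act a m x l"
  "poly1 m \<Longrightarrow> act a (\<lambda>y. y * m y) x l = (x + l) * act a m x l"
  "poly1 m \<Longrightarrow> \<forall>n\<ge>N. cprod C n a b = czero C \<Longrightarrow>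
     act a (\<lambda>y. act b m y l2) x l1 = (\<Sum>n<N. l1 ^ n / fact n * act (cprod C n a b) m x (l1 + l2))"
  apply (rule assms[unfolded conf_module_def, THEN conjunct1, rule_format]; assumption)
  apply (rule assms[unfolded conf_module_def, THEN conjunct2, THEN conjunct1, rule_format]; assumption)
  apply (rule assms[unfolded conf_module_def, THEN conjunct2, THEN conjunct2, THEN conjunct1, rule_format]; assumption)
  apply (rule assms[unfolded conf_module_def, THEN conjunct2, THEN conjunct2, THEN conjunct2, THEN conjunct1, rule_format]; assumption)
  apply (rule assms[unfolded conf_module_def, THEN conjunct2, THEN conjunct2, THEN conjunct2, THEN conjunct2, THEN conjunct1, rule_format]; assumption)
  apply (rule assms[unfolded conf_module_def, THEN conjunct2, THEN conjunct2, THEN conjunct2, THEN conjunct2, THEN conjunct2, THEN conjunct1, rule_format]; assumption)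
  apply (rule assms[unfolded conf_module_def, THEN conjunct2, THEN conjunct2, THEN conjunct2, THEN conjunct2, THEN conjunct2, THEN conjunct2, THEN conjunct1, rule_format]; assumption)
  apply (rule assms[unfolded conf_module_def, THEN conjunct2, THEN conjunct2, THEN conjunct2, THEN conjunct2, THEN conjunct2, THEN conjunct2, THEN conjunct2, rule_format]; blast)
  done

definition Qa where "Qa act a x l = act a (\<lambda>_. 1) x l"

lemma act_poly:
  assumes "conf_module C act"
  shows "act a (poly p) x l = poly p (x + l) * Qa act a x l"
proof (induction p)
  case 0
  have "act a (\<lambda>y. 0 * 1) x l = 0 * act a (\<lambda>_. 1) x l"
    by (rule cm_ax(5)[OF assms]) (rule poly1_const)
  thus ?case by (simp add: Qa_def)
next
  case (pCons c p)
  have e: "poly (pCons c p) = (\<lambda>y. c * 1 + y * poly p y)" by (rule ext) simp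
  have "act a (\<lambda>y. c * 1 + y * poly p y) x l = act a (\<lambda>y. c * 1) x l + act a (\<lambda>y. y * poly p y) x l"
    by (rule cm_ax(4)[OF assms]) (auto intro: poly1_intros)
  also have "act a (\<lambda>y. c * 1) x l = c * Qa act a x l"
    unfolding Qa_def by (rule cm_ax(5)[OF assms]) (rule poly1_const)
  also have "act a (\<lambda>y. y * poly p y) x l = (x + l) * act a (poly p) x l"
    by (rule cm_ax(7)[OF assms]) (rule poly1_poly)
  finally show ?case using pCons.IH by (simp add: e algebra_simps)
qed

lemma act_poly1:
  assumes "conf_module C act" "poly1 m"
  shows "act a m x l = m (x + l) * Qa act a x l"
proof -
  obtain p where "\<And>x. m x = poly p x" using assms(2) unfolding poly1_def by blast
  hence "m = poly p" by (simp add: fun_eq_iff)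
  thus ?thesis using act_poly[OF assms(1)] by simp
qed

lemma Qa_props:
  assumes "conf_module C act"
  shows "poly2 (Qa act a)"
    "Qa act (cadd C a b) x l = Qa act a x l + Qa act b x l"
    "Qa act (csmul C r a) x l = r * Qa act a x l"
    "Qa act (cder C a) x l = - l * Qa act a x l"
  unfolding Qa_def
  apply (rule cm_ax(1)[OF assms poly1_const])
  apply (rule cm_ax(2)[OF assms poly1_const])
  apply (rule cm_ax(3)[OF assms poly1_const])
  apply (rule cm_ax(6)[OF assms poly1_const])
  done

lemma Qa_assoc:
  assumes "conf_module C act" "\<forall>n\<ge>N. cprod C n a b = czero C"
  shows "Qa act b (x + l1) l2 * Qa act a x l1 = (\<Sum>n<N. l1 ^ n / fact n * Qa act (cprod C n a b) x (l1 + l2))"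
proof -
  have "act a (\<lambda>y. act b (\<lambda>_. 1) y l2) x l1 = (\<Sum>n<N. l1 ^ n / fact n * act (cprod C n a b) (\<lambda>_. 1) x (l1 + l2))"
    by (rule cm_ax(8)[OF assms(1) poly1_const assms(2)])
  moreover have "act a (\<lambda>y. act b (\<lambda>_. 1) y l2) x l1 = Qa act b (x + l1) l2 * Qa act a x l1"
    by (subst act_poly1[OF assms(1)]) (auto simp: Qa_def intro: poly2_fix_l cm_ax(1)[OF assms(1)] poly1_const)
  ultimately show ?thesis by (simp add: Qa_def)
qed

section \<open>Cochains\<close>

lemma c1_ax:
  assumes "cochain1 C \<phi>"
  shows "poly2 (\<phi> a)" "\<phi> (cadd C a b) x l = \<phi> a x l + \<phi> b x l"
    "\<phi> (csmul C r a) x l = r * \<phi> a x l" "\<phi> (cder C a) x l = - l * \<phi> a x l"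
  apply (rule assms[unfolded cochain1_def, THEN conjunct1, rule_format])
  apply (rule assms[unfolded cochain1_def, THEN conjunct2, THEN conjunct1, rule_format])
  apply (rule assms[unfolded cochain1_def, THEN conjunct2, THEN conjunct2, THEN conjunct1, rule_format])
  apply (rule assms[unfolded cochain1_def, THEN conjunct2, THEN conjunct2, THEN conjunct2, rule_format])
  done

definition RC :: "('k::field_char_0, 'c) conf_alg \<Rightarrow> ('c \<Rightarrow> ('k \<Rightarrow> 'k) \<Rightarrow> 'k \<Rightarrow> 'k \<Rightarrow> 'k) \<Rightarrow> ('c \<Rightarrow> 'k \<Rightarrow> 'k) \<Rightarrow> bool" where
  "RC C act g \<longleftrightarrow>
     (\<forall>a b t. g (cadd C a b) t = g a t + g b t) \<and>
     (\<forall>r a t. g (csmul C r a) t = r * g a t) \<and>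
     (\<forall>a t. g (cder C a) t = - t * g a t) \<and>
     (\<forall>a b l1 l2. g b l2 * Qa act a (- l1 - l2) l1 =
        (\<Sum>n<loc_bound C a b. l1 ^ n / fact n * g (cprod C n a b) (l1 + l2)))"

lemma RC_zero:
  fixes g :: "'c \<Rightarrow> 'k::field_char_0 \<Rightarrow> 'k"
  assumes "kspace C" "\<forall>a b t. g (cadd C a b) t = g a t + g b t"
  shows "g (czero C) t = 0"
proof -
  have "g (cadd C (czero C) (czero C)) t = g (czero C) t + g (czero C) t" using assms(2) by blast
  hence "g (czero C) t = g (czero C) t + g (czero C) t" by (simp only: ks_ax(3)[OF assms(1)])
  thus ?thesis by simp
qed

lemma RC_unique:
  assumes ac: "assoc_conf C" and gen: "conf_generates C v" and rc: "RC C act g"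
    and gv: "\<And>t. g v t = 0"
  shows "g a t = 0"
proof -
  let ?S = "{b. \<forall>t. g b t = 0}"
  have ks: "kspace C" using ac_ax(1)[OF ac] .
  have add: "\<forall>a b t. g (cadd C a b) t = g a t + g b t" using rc unfolding RC_def by blast
  have z: "g (czero C) t = 0" for t by (rule RC_zero[OF ks add])
  have prodS: "cprod C n a b \<in> ?S" if "b \<in> ?S" for n a b
  proof (cases "loc_bound C a b \<le> n")
    case True thus ?thesis using lb_zero[OF ac True] z by simp
  next
    case False
    show ?thesis
    proof (safe)
      fix \<mu>
      have "(\<Sum>k<loc_bound C a b. (g (cprod C k a b) \<mu> / fact k) * l1 ^ k) = 0" for l1
      proof -
        have "g b (\<mu> - l1) * Qa act a (- l1 - (\<mu> - l1)) l1 =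
            (\<Sum>k<loc_bound C a b. l1 ^ k / fact k * g (cprod C k a b) (l1 + (\<mu> - l1)))"
          using rc unfolding RC_def by blast
        thus ?thesis using that by (simp add: mult_ac)
      qed
      from coeffs_zero[OF this] False have "g (cprod C n a b) \<mu> / fact n = 0" by simp
      thus "g (cprod C n a b) \<mu> = 0" by simp
    qed
  qed
  have "?S = UNIV"
    using gen unfolding conf_generates_def
  proof (elim allE impE)
    show "v \<in> ?S \<and> czero C \<in> ?S \<and> (\<forall>a\<in>?S. \<forall>b\<in>?S. cadd C a b \<in> ?S) \<and> (\<forall>r. \<forall>a\<in>?S. csmul C r a \<in> ?S) \<and>
      (\<forall>a\<in>?S. cder C a \<in> ?S) \<and> (\<forall>n. \<forall>a\<in>?S. \<forall>b\<in>?S. cprod C n a b \<in> ?S)"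
      using gv z rc prodS unfolding RC_def by auto
  qed
  thus ?thesis by auto
qed

lemma RC_diff:
  assumes "RC C act g1" "RC C act g2"
  shows "RC C act (\<lambda>a t. g1 a t - g2 a t)"
  unfolding RC_def
proof (intro conjI allI)
  note A = assms[unfolded RC_def]
  show "g1 (cadd C a b) t - g2 (cadd C a b) t = g1 a t - g2 a t + (g1 b t - g2 b t)" for a b t
    using A by simp
  show "g1 (csmul C r a) t - g2 (csmul C r a) t = r * (g1 a t - g2 a t)" for r a t
    using A by (simp add: right_diff_distrib)
  show "g1 (cder C a) t - g2 (cder C a) t = - t * (g1 a t - g2 a t)" for a t
    using A by (simp add: right_diff_distrib)
  show "(g1 b l2 - g2 b l2) * Qa act a (- l1 - l2) l1 =
    (\<Sum>n<loc_bound C a b. l1 ^ n / fact n * (g1 (cprod C n a b) (l1 + l2) - g2 (cprod C n a b) (l1 + l2)))"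
    for a b l1 l2
    using A by (simp add: left_diff_distrib right_diff_distrib sum_subtractf)
qed

lemma RC_scale:
  assumes "RC C act g"
  shows "RC C act (\<lambda>a t. c * g a t)"
  unfolding RC_def
proof (intro conjI allI)
  note A = assms[unfolded RC_def]
  show "c * g (cadd C a b) t = c * g a t + c * g b t" for a b t
    using A by (simp add: distrib_left)
  show "c * g (csmul C r a) t = r * (c * g a t)" for r a t
    using A by (simp add: mult_ac)
  show "c * g (cder C a) t = - t * (c * g a t)" for a t
    using A by (simp add: mult_ac)
  show "c * g b l2 * Qa act a (- l1 - l2) l1 =
    (\<Sum>n<loc_bound C a b. l1 ^ n / fact n * (c * g (cprod C n a b) (l1 + l2)))"
    for a b l1 l2
  proof -
    have "c * g b l2 * Qa act a (- l1 - l2) l1 = c * (g b l2 * Qa act a (- l1 - l2) l1)" by (simp add: mult_ac)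
    also have "\<dots> = c * (\<Sum>n<loc_bound C a b. l1 ^ n / fact n * g (cprod C n a b) (l1 + l2))"
      using A by simp
    finally show ?thesis by (simp add: sum_distrib_left mult_ac)
  qed
qed

lemma Z1_RC:
  assumes cm: "conf_module C act" and ac: "assoc_conf C" and Z: "\<phi> \<in> Z1 C act"
  shows "RC C act (\<lambda>a t. \<phi> a (- t) t)"
proof -
  have c1: "cochain1 C \<phi>" using Z unfolding Z1_def by blast
  obtain \<chi> where chi: "\<And>a b x l1 l2. hd1 C act \<phi> a b x l1 l2 = (x + l1 + l2) * \<chi> a b x l1 l2"
    using Z unfolding Z1_def by blast
  have "\<phi> b (- l2) l2 * Qa act a (- l1 - l2) l1 =
     (\<Sum>n<loc_bound C a b. l1 ^ n / fact n * \<phi> (cprod C n a b) (- (l1 + l2)) (l1 + l2))" for a b l1 l2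
  proof -
    have "hd1 C act \<phi> a b (- l1 - l2) l1 l2 = 0" using chi[of a b "- l1 - l2" l1 l2] by simp
    moreover have "act a (\<lambda>y. \<phi> b y l2) (- l1 - l2) l1 = \<phi> b (- l2) l2 * Qa act a (- l1 - l2) l1"
      by (subst act_poly1[OF cm]) (auto intro: poly2_fix_l c1_ax(1)[OF c1])
    ultimately show ?thesis unfolding hd1_def by (simp add: minus_add_distrib)
  qed
  thus ?thesis using c1_ax(2-4)[OF c1] unfolding RC_def by simp
qed

lemma hd0_RC:
  assumes cm: "conf_module C act" and ac: "assoc_conf C"
  shows "RC C act (\<lambda>a t. c * Qa act a (- t) t)"
proof -
  have "Qa act b (- l2) l2 * Qa act a (- l1 - l2) l1 =
     (\<Sum>n<loc_bound C a b. l1 ^ n / fact n * Qa act (cprod C n a b) (- t) t)" if "t = l1 + l2" for a b l1 l2 t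
    using Qa_assoc[OF cm, of "loc_bound C a b" a b "- l1 - l2" l1 l2] lb_zero[OF ac] that
    by (simp add: minus_add_distrib)
  hence "RC C act (\<lambda>a t. Qa act a (- t) t)"
    unfolding RC_def using Qa_props[OF cm] by simp
  thus ?thesis by (rule RC_scale)
qed

section \<open>Division\<close>

lemma ddiff3:
  assumes "poly2 (Q :: 'k::field_char_0 \<Rightarrow> 'k \<Rightarrow> 'k)"
  shows "\<exists>D. poly3 D \<and> (\<forall>x l1 l2. Q x l1 - Q (- l1 - l2) l1 = (x + l1 + l2) * D x l1 l2)"
proof -
  obtain c d where cd: "\<And>x l. Q x l = (\<Sum>i<d. \<Sum>j<d. c i j * x ^ i * l ^ j)"
    using poly2_msum[OF assms] by blast
  define S where "S i x l1 l2 = (\<Sum>k<i. (- l1 - l2) ^ (i - Suc k) * x ^ k)" for i and x l1 l2 :: 'k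
  define D where "D x l1 l2 = (\<Sum>i<d. \<Sum>j<d. c i j * S i x l1 l2 * l1 ^ j)"
    for x l1 l2 :: 'k
  have "poly3 D" unfolding D_def S_def by (intro poly3_intros)
  moreover have "Q x l1 - Q (- l1 - l2) l1 = (x + l1 + l2) * D x l1 l2" for x l1 l2
  proof -
    have e: "x ^ i - (- l1 - l2) ^ i = (x + l1 + l2) * S i x l1 l2" for i
      using power_diff_sumr2[of x i "- l1 - l2"] by (simp add: algebra_simps S_def)
    have "Q x l1 - Q (- l1 - l2) l1 = (\<Sum>i<d. \<Sum>j<d. c i j * (x ^ i - (- l1 - l2) ^ i) * l1 ^ j)"
      unfolding cd by (simp add: sum_subtractf[symmetric] left_diff_distrib right_diff_distrib)
    also have "\<dots> = (\<Sum>i<d. \<Sum>j<d. (x + l1 + l2) * (c i j * S i x l1 l2 * l1 ^ j))"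
      unfolding e by (simp add: mult_ac)
    also have "\<dots> = (x + l1 + l2) * D x l1 l2"
      unfolding D_def by (simp add: sum_distrib_left)
    finally show ?thesis .
  qed
  ultimately show ?thesis by blast
qed

lemma ddiff2:
  assumes "poly2 (g :: 'k::field_char_0 \<Rightarrow> 'k \<Rightarrow> 'k)" "\<And>l. g (- l) l = 0"
  shows "\<exists>h. poly2 h \<and> (\<forall>x l. g x l = (x + l) * h x l)"
proof -
  obtain D where D: "poly3 D" "\<And>x l1 l2. g x l1 - g (- l1 - l2) l1 = (x + l1 + l2) * D x l1 l2"
    using ddiff3[OF assms(1)] by blast
  obtain p where p: "\<And>x l1 l2. D x l1 l2 = poly (poly (poly p [:[:l2:]:]) [:l1:]) x"
    using D(1) unfolding poly3_def by blast
  have "poly2 (\<lambda>x l. D x l 0)" unfolding poly2_def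
    by (rule exI[of _ "poly p 0"]) (simp add: p)
  moreover have "g x l = (x + l) * D x l 0" for x l using D(2)[of x l 0] assms(2)[of l] by simp
  ultimately show ?thesis by blast
qed

lemma cancel_lin:
  fixes A B :: "'k::field_char_0 \<Rightarrow> 'k"
  assumes "poly1 A" "poly1 B" "\<And>x. (x - y) * A x = (x - y) * B x"
  shows "A x = B x"
proof (cases "x = y")
  case True
  have "A y = B y" by (rule poly1_off_point[OF assms(1,2)]) (use assms(3) in auto)
  thus ?thesis using True by simp
next
  case False thus ?thesis using assms(3)[of x] by simp
qed

lemma cancel_lin':
  fixes A B :: "'k::field_char_0 \<Rightarrow> 'k"
  assumes "poly1 A" "poly1 B" "\<And>x. (x + l) * A x = (x + l) * B x"
  shows "A x = B x"
  by (rule cancel_lin[where y = "- l", OF assms(1,2)]) (use assms(3) in simp)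

lemma in_B1:
  assumes cm: "conf_module C act" and ac: "assoc_conf C" and c1: "cochain1 C \<phi>" and m: "poly1 m"
    and red: "\<And>a t. \<phi> a (- t) t = act a m (- t) t"
  shows "\<phi> \<in> B1 C act"
proof -
  define g where "g a x l = \<phi> a x l - act a m x l" for a x l
  have pg: "poly2 (g a)" for a unfolding g_def
    by (intro poly2_diff c1_ax(1)[OF c1] cm_ax(1)[OF cm m])
  have "\<exists>h. poly2 h \<and> (\<forall>x l. g a x l = (x + l) * h x l)" for a
    by (rule ddiff2[OF pg]) (simp add: g_def red)
  then obtain \<psi> where psi: "\<And>a. poly2 (\<psi> a)" "\<And>a x l. g a x l = (x + l) * \<psi> a x l"
    by metis
  have pl: "poly1 (\<lambda>x. \<psi> a x l)" for a l by (rule poly2_fix_l[OF psi(1)])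
  have "cochain1 C \<psi>"
    unfolding cochain1_def
  proof (intro conjI allI)
    show "poly2 (\<psi> a)" for a by (rule psi(1))
    show "\<psi> (cadd C a b) x l = \<psi> a x l + \<psi> b x l" for a b x l
    proof (rule cancel_lin'[OF pl poly1_add[OF pl pl]])
      fix x
      have "(x + l) * \<psi> (cadd C a b) x l = g (cadd C a b) x l" by (simp add: psi(2))
      also have "\<dots> = g a x l + g b x l"
        by (simp add: g_def c1_ax(2)[OF c1] cm_ax(2)[OF cm m])
      also have "\<dots> = (x + l) * (\<psi> a x l + \<psi> b x l)" by (simp add: psi(2) distrib_left)
      finally show "(x + l) * \<psi> (cadd C a b) x l = (x + l) * (\<psi> a x l + \<psi> b x l)" .
    qed
    show "\<psi> (csmul C r a) x l = r * \<psi> a x l" for r a x l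
    proof (rule cancel_lin'[OF pl poly1_mult[OF poly1_const pl]])
      fix x
      have "(x + l) * \<psi> (csmul C r a) x l = g (csmul C r a) x l" by (simp add: psi(2))
      also have "\<dots> = r * g a x l"
        by (simp add: g_def c1_ax(3)[OF c1] cm_ax(3)[OF cm m] right_diff_distrib)
      also have "\<dots> = (x + l) * (r * \<psi> a x l)" by (simp add: psi(2) mult_ac)
      finally show "(x + l) * \<psi> (csmul C r a) x l = (x + l) * (r * \<psi> a x l)" .
    qed
    show "\<psi> (cder C a) x l = - l * \<psi> a x l" for a x l
    proof (rule cancel_lin'[OF pl poly1_mult[OF poly1_const pl]])
      fix x
      have "(x + l) * \<psi> (cder C a) x l = g (cder C a) x l" by (simp add: psi(2))
      also have "\<dots> = - l * g a x l"
        by (simp add: g_def c1_ax(4)[OF c1] cm_ax(6)[OF cm m] right_diff_distrib)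
      also have "\<dots> = (x + l) * (- l * \<psi> a x l)" by (simp add: psi(2) mult_ac)
      finally show "(x + l) * \<psi> (cder C a) x l = (x + l) * (- l * \<psi> a x l)" .
    qed
  qed
  moreover have "\<phi> a x l = hd0 act m a x l + (x + l) * \<psi> a x l" for a x l
    using psi(2)[of a x l] unfolding g_def hd0_def by (simp add: diff_eq_eq add.commute)
  ultimately show ?thesis unfolding B1_def using m by blast
qed



lemma RC_ax:
  assumes "RC C act g"
  shows "g (cadd C a b) t = g a t + g b t" "g (csmul C r a) t = r * g a t"
    "g (cder C a) t = - t * g a t"
    "g b l2 * Qa act a (- l1 - l2) l1 =
        (\<Sum>n<loc_bound C a b. l1 ^ n / fact n * g (cprod C n a b) (l1 + l2))"
  using assms unfolding RC_def by blast+

lemma RC_neg: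
  assumes ks: "kspace C" and rc: "RC C act g"
  shows "g (cneg C a) t = - g a t"
proof -
  have z: "g (czero C) t = 0"
    by (rule RC_zero[OF ks]) (use RC_ax(1)[OF rc] in blast)
  have "g (cadd C (cneg C a) a) t = g (cneg C a) t + g a t" by (rule RC_ax(1)[OF rc])
  hence "0 = g (cneg C a) t + g a t" using ks_ax(4)[OF ks] z by simp
  thus ?thesis by (simp add: eq_neg_iff_add_eq_0)
qed

lemma sum3: "(\<Sum>n<3. f n) = f 0 + f 1 + f 2" for f :: "nat \<Rightarrow> 'a::comm_monoid_add"
  by (simp add: numeral_3_eq_3 numeral_2_eq_2 add_ac)

lemma red_v_linear:
  fixes \<alpha> \<Delta> :: "'k::field_char_0"
  assumes ac: "assoc_conf C" and rels: "U3_rels C v"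
    and Qv: "\<And>x l. Qa act v x l = \<alpha> + x + \<Delta> * l" and D0: "\<Delta> \<noteq> 0"
    and rc: "RC C act g" and pg: "poly1 (g v)"
  shows "\<exists>p0 p1. (\<forall>t. g v t = p0 + p1 * t) \<and> p0 * (1 - \<Delta>) + p1 * \<alpha> = 0"
proof -
  have ks: "kspace C" by (rule ac_ax(1)[OF ac])
  have z: "g (czero C) t = 0" for t
    by (rule RC_zero[OF ks]) (use RC_ax(1)[OF rc] in blast)
  have r3: "\<forall>n\<ge>3. cprod C n v v = czero C" using rels unfolding U3_rels_def by blast
  have LB: "loc_bound C v v \<le> 3" by (rule lb_le[OF r3])
  define A where "A = g (cprod C 0 v v) 0"
  define B where "B = g (cprod C 1 v v) 0"
  define Cc where "Cc = g (cprod C 2 v v) 0 / 2"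
  have E: "g v (- s) * (\<alpha> + \<Delta> * s) = A + B * s + Cc * s ^ 2" for s
  proof -
    have "g v (- s) * Qa act v (- s - (- s)) s =
        (\<Sum>n<loc_bound C v v. s ^ n / fact n * g (cprod C n v v) (s + - s))"
      by (rule RC_ax(4)[OF rc])
    also have "\<dots> = (\<Sum>n<3. s ^ n / fact n * g (cprod C n v v) (s + - s))"
      by (rule sum_extend[symmetric]) (use lb_zero[OF ac] z LB in auto)
    also have "\<dots> = A + B * s + Cc * s ^ 2"
      unfolding sum3 by (simp add: A_def B_def Cc_def power2_eq_square)
    finally show ?thesis using Qv by simp
  qed
  obtain p where p: "\<And>t. g v t = poly p t" using pg unfolding poly1_def by blast
  define q where "q = pcompose p [:0, -1:]"
  have q: "poly q s = g v (- s)" for s by (simp add: q_def poly_pcompose p)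
  have "poly ([:\<alpha>, \<Delta>:] * q) s = poly [:A, B, Cc:] s" for s
    using E[of s] q[of s] by (simp add: algebra_simps power2_eq_square)
  hence eqp: "[:\<alpha>, \<Delta>:] * q = [:A, B, Cc:]" by (simp add: poly_eq_poly_eq_iff[symmetric] fun_eq_iff)
  have dq: "degree q \<le> 1"
  proof (cases "q = 0")
    case True thus ?thesis by simp
  next
    case False
    have "degree ([:\<alpha>, \<Delta>:] * q) = degree [:\<alpha>, \<Delta>:] + degree q"
      by (rule degree_mult_eq) (use D0 False in auto)
    moreover have "degree [:A, B, Cc:] \<le> 2" by (simp add: degree_pCons_le)
    moreover have "degree [:\<alpha>, \<Delta>:] = 1" using D0 by simp
    ultimately show ?thesis using eqp by simp
  qed
  have "degree q = degree p" by (simp add: q_def degree_pcompose)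
  hence dp: "degree p < 2" using dq by simp
  define p0 where "p0 = coeff p 0"
  define p1 where "p1 = coeff p 1"
  have lin: "g v t = p0 + p1 * t" for t
    unfolding p poly_sum_lt[OF dp] by (simp add: p0_def p1_def numeral_2_eq_2 mult_ac)
  have e1: "(p0 - p1) * (\<alpha> + \<Delta>) = A + B + Cc" using E[of 1] lin[of "-1"] by simp
  have e2: "(p0 + p1) * (\<alpha> - \<Delta>) = A - B + Cc" using E[of "-1"] lin[of 1] by simp
  have Bv: "B = p0 * \<Delta> - p1 * \<alpha>"
  proof -
    have "B = ((p0 - p1) * (\<alpha> + \<Delta>) - (p0 + p1) * (\<alpha> - \<Delta>)) / 2" using e1 e2 by (simp add: field_simps)
    also have "\<dots> = p0 * \<Delta> - p1 * \<alpha>" by (simp add: field_simps algebra_simps)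
    finally show ?thesis .
  qed
  have rel: "cadd C (csmul C 2 (cprod C 1 v v)) (cneg C (cder C (cprod C 2 v v))) = csmul C 2 v"
    using rels unfolding U3_rels_def by blast
  have "g (cadd C (csmul C 2 (cprod C 1 v v)) (cneg C (cder C (cprod C 2 v v)))) 0 = g (csmul C 2 v) 0"
    by (simp only: rel)
  hence "2 * B = 2 * p0"
    using RC_ax(1,2,3)[OF rc] RC_neg[OF ks rc] lin[of 0] by (simp add: B_def)
  hence "B = p0" by simp
  hence "p0 * (1 - \<Delta>) + p1 * \<alpha> = 0" using Bv by (simp add: algebra_simps)
  thus ?thesis using lin by blast
qed

lemma Qv_Qa:
  assumes "\<forall>x l. act v (\<lambda>_. 1) x l = \<alpha> + x + \<Delta> * l"
  shows "Qa act v x l = \<alpha> + x + \<Delta> * l"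
  using assms unfolding Qa_def by blast

lemma generic_case:
  fixes C :: "('k::field_char_0, 'c) conf_alg" and v :: 'c
    and act :: "'c \<Rightarrow> ('k \<Rightarrow> 'k) \<Rightarrow> 'k \<Rightarrow> 'k \<Rightarrow> 'k"
    and \<alpha> \<Delta> :: 'k
  assumes U: "is_U3 C v"
    and cm: "conf_module C act"
    and Qv0: "\<forall>x l. act v (\<lambda>_. 1) x l = \<alpha> + x + \<Delta> * l"
    and D0: "\<Delta> \<noteq> 0"
    and nt: "\<not> (\<Delta> = 1 \<and> \<alpha> = 0)"
  shows "H1_dim_eq C act 0"
proof -
  have ac: "assoc_conf C" and rels: "U3_rels C v" and gen: "conf_generates C v"
    using U unfolding is_U3_def by blast+
  have Qv: "Qa act v x l = \<alpha> + x + \<Delta> * l" for x l using Qv0 unfolding Qa_def by blast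
  have inB: "\<phi> \<in> B1 C act" if Z: "\<phi> \<in> Z1 C act" for \<phi>
  proof -
    have c1: "cochain1 C \<phi>" using Z unfolding Z1_def by blast
    have rc: "RC C act (\<lambda>a t. \<phi> a (- t) t)" by (rule Z1_RC[OF cm ac Z])
    obtain p0 p1 where pl: "\<And>t. \<phi> v (- t) t = p0 + p1 * t" and rl: "p0 * (1 - \<Delta>) + p1 * \<alpha> = 0"
      using red_v_linear[OF ac rels Qv D0 rc poly2_diag[OF c1_ax(1)[OF c1]]] by blast
    obtain c0 where c0: "\<And>t. p0 + p1 * t = c0 * (\<alpha> + (\<Delta> - 1) * t)"
    proof (cases "\<alpha> = 0")
      case True
      hence "\<Delta> \<noteq> 1" using nt by blast
      hence "p0 = 0" using rl True by simp
      show ?thesis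
        by (rule that[of "p1 / (\<Delta> - 1)"]) (use \<open>p0 = 0\<close> True \<open>\<Delta> \<noteq> 1\<close> in simp)
    next
      case False
      have h: "p0 * (\<Delta> - 1) = p1 * \<alpha>" using rl by (simp add: algebra_simps)
      show ?thesis
      proof (rule that[of "p0 / \<alpha>"])
        fix t
        have "p0 / \<alpha> * (\<alpha> + (\<Delta> - 1) * t) = p0 + (p0 * (\<Delta> - 1)) / \<alpha> * t"
          using False by (simp add: field_simps)
        also have "\<dots> = p0 + (p1 * \<alpha>) / \<alpha> * t" by (simp only: h)
        also have "\<dots> = p0 + p1 * t" using False by simp
        finally show "p0 + p1 * t = p0 / \<alpha> * (\<alpha> + (\<Delta> - 1) * t)" by simp
      qed
    qed
    have rc2: "RC C act (\<lambda>a t. \<phi> a (- t) t - c0 * Qa act a (- t) t)"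
      by (rule RC_diff[OF rc hd0_RC[OF cm ac]])
    have "\<phi> a (- t) t - c0 * Qa act a (- t) t = 0" for a t
    proof (rule RC_unique[OF ac gen rc2])
      fix t
      have "Qa act v (- t) t = \<alpha> + (\<Delta> - 1) * t" using Qv by (simp add: algebra_simps)
      thus "\<phi> v (- t) t - c0 * Qa act v (- t) t = 0" by (simp add: pl c0)
    qed
    hence "\<phi> a (- t) t = act a (\<lambda>_. c0) (- t) t" for a t
      using act_poly1[OF cm poly1_const, of a c0] by simp
    thus ?thesis by (rule in_B1[OF cm ac c1 poly1_const])
  qed
  show ?thesis unfolding H1_dim_eq_def quot_dim_eq_def
    by (rule exI[of _ "{}"]) (use inB in simp)
qed



lemma coeff_poly_const:
  "coeff (poly R [:l:]) i = poly (map_poly (\<lambda>q. coeff q i) R) l"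
proof (induction R)
  case 0 thus ?case by simp
next
  case (pCons a R)
  have "coeff (poly (pCons a R) [:l:]) i = coeff a i + l * coeff (poly R [:l:]) i"
    by simp
  thus ?case using pCons.IH by (simp add: map_poly_pCons)
qed

lemma poly2_unique:
  fixes P P' :: "'k::field_char_0 poly poly"
  assumes "\<And>x l. poly (poly P [:l:]) x = poly (poly P' [:l:]) x"
  shows "P = P'"
proof -
  define R where "R = P - P'"
  have R0: "poly R [:l:] = 0" for l
  proof -
    have "poly (poly R [:l:]) x = 0" for x using assms[where x = x and l = l] by (simp add: R_def)
    thus ?thesis using poly_all_0_iff_0 by blast
  qed
  have "coeff (coeff R j) i = 0" for i j
  proof -
    have "poly (map_poly (\<lambda>q. coeff q i) R) l = 0" for l
      using R0[of l] coeff_poly_const[of R l i] by simp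
    hence "map_poly (\<lambda>q. coeff q i) R = 0" using poly_all_0_iff_0 by blast
    hence "coeff (map_poly (\<lambda>q. coeff q i) R) j = 0" by simp
    thus ?thesis by (simp add: coeff_map_poly)
  qed
  hence "R = 0" by (intro poly_eqI) (simp add: poly_eq_iff)
  thus ?thesis by (simp add: R_def)
qed

definition lrep :: "('c \<Rightarrow> ('k::field_char_0 \<Rightarrow> 'k) \<Rightarrow> 'k \<Rightarrow> 'k \<Rightarrow> 'k) \<Rightarrow> 'c \<Rightarrow> 'k poly \<Rightarrow> 'k poly poly" where
  "lrep act a p = (SOME P. \<forall>x l. act a (poly p) x l = poly (poly P [:l:]) x)"

definition mprod :: "('c \<Rightarrow> ('k::field_char_0 \<Rightarrow> 'k) \<Rightarrow> 'k \<Rightarrow> 'k \<Rightarrow> 'k) \<Rightarrow> nat \<Rightarrow> 'c \<Rightarrow> 'k poly \<Rightarrow> 'k poly" where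
  "mprod act n a p = smult (fact n) (coeff (lrep act a p) n)"

definition mbound where "mbound act a p = Suc (degree (lrep act a p))"

context
  fixes C :: "('k::field_char_0, 'c) conf_alg" and act
  assumes cm: "conf_module C act"
begin

lemma lrep_spec: "act a (poly p) x l = poly (poly (lrep act a p) [:l:]) x"
proof -
  have "\<exists>P. \<forall>x l. act a (poly p) x l = poly (poly P [:l:]) x"
    using cm_ax(1)[OF cm poly1_poly] unfolding poly2_def by blast
  hence "\<forall>x l. act a (poly p) x l = poly (poly (lrep act a p) [:l:]) x"
    unfolding lrep_def by (rule someI_ex)
  thus ?thesis by blast
qed

lemma mprod_char:
  assumes "\<And>x l. act a (poly p) x l = (\<Sum>n<N. l ^ n / fact n * poly (q n) x)"
  shows "mprod act n a p = (if n < N then q n else 0)"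
proof -
  define P' where "P' = (\<Sum>n<N. monom (smult (1 / fact n) (q n)) n)"
  have "poly (poly P' [:l:]) x = (\<Sum>n<N. l ^ n / fact n * poly (q n) x)" for x l
    by (simp add: P'_def poly_sum poly_monom poly_power mult_ac)
  hence "lrep act a p = P'" using lrep_spec assms by (intro poly2_unique) simp
  moreover have "coeff P' n = (if n < N then smult (1 / fact n) (q n) else 0)"
    by (simp add: P'_def coeff_sum)
  ultimately show ?thesis by (simp add: mprod_def)
qed

lemma mprod_exp:
  assumes "mbound act a p \<le> N"
  shows "act a (poly p) x l = (\<Sum>n<N. l ^ n / fact n * poly (mprod act n a p) x)"
proof -
  have d: "degree (lrep act a p) < N" using assms by (simp add: mbound_def)
  have "act a (poly p) x l = poly (poly (lrep act a p) [:l:]) x" by (rule lrep_spec)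
  also have "poly (lrep act a p) [:l:] = (\<Sum>n<N. coeff (lrep act a p) n * [:l:] ^ n)"
    by (rule poly_sum_lt[OF d])
  finally show ?thesis
    by (simp add: poly_sum poly_power mprod_def mult_ac)
qed

lemma mprod_vanish:
  assumes "mbound act a p \<le> n" shows "mprod act n a p = 0"
  using assms by (simp add: mprod_def mbound_def coeff_eq_0)

lemma egf_shift_aux:
  fixes S F l L P :: "'a::field"
  assumes "S \<noteq> 0" "F \<noteq> 0"
  shows "l * L / (S * F) * (S * P) = l * (L / F * P)"
  using assms by (simp add: field_simps)

lemma egf_shift_term:
  fixes l P :: "'k::field_char_0"
  shows "l ^ Suc k / fact (Suc k) * (of_nat (Suc k) * P) = l * (l ^ k / fact k * P)"
proof -
  have ne: "(of_nat (Suc k) :: 'k) \<noteq> 0" by (rule of_nat_neq_0)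
  have "l ^ Suc k / fact (Suc k) * (of_nat (Suc k) * P) = l * l ^ k / (of_nat (Suc k) * fact k) * (of_nat (Suc k) * P)"
    by (simp only: fact_Suc power_Suc)
  also have "\<dots> = l * (l ^ k / fact k * P)" by (rule egf_shift_aux[OF ne fact_nonzero])
  finally show ?thesis .
qed

lemma egf_scale:
  fixes r :: "'k::field_char_0"
  shows "r * (\<Sum>k<N. l ^ k / fact k * f k) = (\<Sum>k<N. l ^ k / fact k * (r * f k))"
  by (simp add: sum_distrib_left mult.left_commute)

lemma egf_add:
  fixes f g :: "nat \<Rightarrow> 'k::field_char_0"
  shows "(\<Sum>k<N. l ^ k / fact k * f k) + (\<Sum>k<N. l ^ k / fact k * g k) = (\<Sum>k<N. l ^ k / fact k * (f k + g k))"
  by (simp add: sum.distrib[symmetric] distrib_left)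

lemma mprod_lin_left:
  "mprod act n (cadd C a a') p = mprod act n a p + mprod act n a' p"
  "mprod act n (csmul C r a) p = smult r (mprod act n a p)"
proof -
  define N where "N = mbound act a p + mbound act a' p + Suc n"
  have N1: "mbound act a p \<le> N" and N2: "mbound act a' p \<le> N" and Nn: "n < N" by (simp_all add: N_def)
  have "act (cadd C a a') (poly p) x l = (\<Sum>k<N. l ^ k / fact k * poly (mprod act k a p + mprod act k a' p) x)" for x l
    by (simp only: cm_ax(2)[OF cm poly1_poly] mprod_exp[OF N1] mprod_exp[OF N2] egf_add poly_add)
  from mprod_char[OF this] show "mprod act n (cadd C a a') p = mprod act n a p + mprod act n a' p"
    using Nn by simp
  have "act (csmul C r a) (poly p) x l = (\<Sum>k<N. l ^ k / fact k * poly (smult r (mprod act k a p)) x)" for x l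
    by (simp only: cm_ax(3)[OF cm poly1_poly] mprod_exp[OF N1] egf_scale poly_smult)
  from mprod_char[OF this] show "mprod act n (csmul C r a) p = smult r (mprod act n a p)"
    using Nn by simp
qed

lemma act_poly_add: "act a (poly (p + p')) x l = act a (poly p) x l + act a (poly p') x l"
  using act_poly[OF cm, of a "p + p'"] act_poly[OF cm, of a p] act_poly[OF cm, of a p']
  by (simp add: distrib_right)

lemma act_poly_smult: "act a (poly (smult r p)) x l = r * act a (poly p) x l"
  using act_poly[OF cm, of a "smult r p"] act_poly[OF cm, of a p] by simp

lemma mprod_lin_right:
  "mprod act n a (p + p') = mprod act n a p + mprod act n a p'"
  "mprod act n a (smult r p) = smult r (mprod act n a p)"
proof -
  define N where "N = mbound act a p + mbound act a p' + Suc n"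
  have N1: "mbound act a p \<le> N" and N2: "mbound act a p' \<le> N" and Nn: "n < N" by (simp_all add: N_def)
  have "act a (poly (p + p')) x l = (\<Sum>k<N. l ^ k / fact k * poly (mprod act k a p + mprod act k a p') x)" for x l
    by (simp only: act_poly_add mprod_exp[OF N1] mprod_exp[OF N2] egf_add poly_add)
  from mprod_char[OF this] show "mprod act n a (p + p') = mprod act n a p + mprod act n a p'"
    using Nn by simp
  have "act a (poly (smult r p)) x l = (\<Sum>k<N. l ^ k / fact k * poly (smult r (mprod act k a p)) x)" for x l
    by (simp only: act_poly_smult mprod_exp[OF N1] egf_scale poly_smult)
  from mprod_char[OF this] show "mprod act n a (smult r p) = smult r (mprod act n a p)"
    using Nn by simp
qed

lemma mprod_der_left:
  "mprod act 0 (cder C a) p = 0"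
  "mprod act (Suc n) (cder C a) p = smult (- of_nat (Suc n)) (mprod act n a p)"
proof -
  define N where "N = mbound act a p + Suc n"
  have N1: "mbound act a p \<le> N" and Nn: "n < N" by (simp_all add: N_def)
  define q where "q j = (case j of 0 \<Rightarrow> 0 | Suc k \<Rightarrow> smult (- of_nat (Suc k)) (mprod act k a p))" for j
  have "act (cder C a) (poly p) x l = (\<Sum>j<Suc N. l ^ j / fact j * poly (q j) x)" for x l
  proof -
    have "act (cder C a) (poly p) x l = - l * (\<Sum>k<N. l ^ k / fact k * poly (mprod act k a p) x)"
      by (simp only: cm_ax(6)[OF cm poly1_poly] mprod_exp[OF N1])
    also have "\<dots> = (\<Sum>k<N. l ^ Suc k / fact (Suc k) * poly (q (Suc k)) x)"
    proof -
      have "l ^ Suc k / fact (Suc k) * poly (q (Suc k)) x = - l * (l ^ k / fact k * poly (mprod act k a p) x)" for k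
      proof -
        have "poly (q (Suc k)) x = of_nat (Suc k) * (- poly (mprod act k a p) x)"
          by (simp add: q_def del: of_nat_Suc)
        thus ?thesis using egf_shift_term[of l k "- poly (mprod act k a p) x"] by simp
      qed
      thus ?thesis by (simp add: sum_distrib_left)
    qed
    also have "\<dots> = (\<Sum>j<Suc N. l ^ j / fact j * poly (q j) x)"
      by (simp only: sum.lessThan_Suc_shift) (simp add: q_def)
    finally show ?thesis .
  qed
  note c = mprod_char[OF this]
  show "mprod act 0 (cder C a) p = 0" using c[of 0] by (simp add: q_def)
  show "mprod act (Suc n) (cder C a) p = smult (- of_nat (Suc n)) (mprod act n a p)"
    using c[of "Suc n"] Nn by (simp add: q_def)
qed

lemma mprod_der_right:
  "mprod act 0 a (pCons 0 p) = pCons 0 (mprod act 0 a p)"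
  "mprod act (Suc n) a (pCons 0 p) = pCons 0 (mprod act (Suc n) a p) + smult (of_nat (Suc n)) (mprod act n a p)"
proof -
  define N where "N = mbound act a p + Suc n"
  have N1: "mbound act a p \<le> N" and Nn: "n < N" by (simp_all add: N_def)
  define q1 where "q1 j = pCons 0 (mprod act j a p)" for j
  define q2 where "q2 j = (case j of 0 \<Rightarrow> 0 | Suc k \<Rightarrow> smult (of_nat (Suc k)) (mprod act k a p))" for j
  have van: "mprod act N a p = 0" by (rule mprod_vanish[OF N1])
  have "act a (poly (pCons 0 p)) x l = (\<Sum>j<Suc N. l ^ j / fact j * poly (q1 j + q2 j) x)" for x l
  proof -
    have "act a (poly (pCons 0 p)) x l = (x + l) * act a (poly p) x l"
      using act_poly[OF cm, of a "pCons 0 p"] act_poly[OF cm, of a p] by simp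
    also have "\<dots> = x * (\<Sum>k<N. l ^ k / fact k * poly (mprod act k a p) x) +
        l * (\<Sum>k<N. l ^ k / fact k * poly (mprod act k a p) x)"
      by (simp only: mprod_exp[OF N1] distrib_right)
    also have "x * (\<Sum>k<N. l ^ k / fact k * poly (mprod act k a p) x) =
        (\<Sum>j<Suc N. l ^ j / fact j * poly (q1 j) x)"
      by (simp only: egf_scale) (simp add: q1_def van)
    also have "l * (\<Sum>k<N. l ^ k / fact k * poly (mprod act k a p) x) =
        (\<Sum>j<Suc N. l ^ j / fact j * poly (q2 j) x)"
    proof -
      have "l ^ Suc k / fact (Suc k) * poly (q2 (Suc k)) x = l * (l ^ k / fact k * poly (mprod act k a p) x)" for k
      proof -
        have "poly (q2 (Suc k)) x = of_nat (Suc k) * poly (mprod act k a p) x"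
          by (simp add: q2_def del: of_nat_Suc)
        thus ?thesis using egf_shift_term[of l k "poly (mprod act k a p) x"] by simp
      qed
      hence "l * (\<Sum>k<N. l ^ k / fact k * poly (mprod act k a p) x) = (\<Sum>k<N. l ^ Suc k / fact (Suc k) * poly (q2 (Suc k)) x)"
        by (simp add: sum_distrib_left)
      also have "\<dots> = (\<Sum>j<Suc N. l ^ j / fact j * poly (q2 j) x)"
        by (simp only: sum.lessThan_Suc_shift) (simp add: q2_def)
      finally show ?thesis .
    qed
    finally show ?thesis by (simp only: egf_add poly_add)
  qed
  note c = mprod_char[OF this]
  show "mprod act 0 a (pCons 0 p) = pCons 0 (mprod act 0 a p)" using c[of 0] by (simp add: q1_def q2_def)
  show "mprod act (Suc n) a (pCons 0 p) = pCons 0 (mprod act (Suc n) a p) + smult (of_nat (Suc n)) (mprod act n a p)"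
    using c[of "Suc n"] Nn by (simp add: q1_def q2_def)
qed

end



lemma tri_box:
  fixes f :: "nat \<Rightarrow> nat \<Rightarrow> 'a::comm_monoid_add"
  assumes z: "\<And>u w. K \<le> u \<or> K \<le> w \<Longrightarrow> f u w = 0"
  shows "(\<Sum>u<K. \<Sum>w<K. f u w) = (\<Sum>i<2 * K. \<Sum>s\<le>i. f s (i - s))"
proof -
  have "(\<Sum>u<K. \<Sum>w<K. f u w) = (\<Sum>(u, w)\<in>{..<K} \<times> {..<K}. f u w)"
    by (simp add: sum.cartesian_product)
  also have "\<dots> = (\<Sum>(u, w)\<in>{(u, w). u + w < 2 * K}. f u w)"
  proof (rule sum.mono_neutral_left)
    show "finite {(u, w). u + w < 2 * K}"
      by (rule finite_subset[of _ "{..<2*K} \<times> {..<2*K}"]) auto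
    show "{..<K} \<times> {..<K} \<subseteq> {(u, w). u + w < 2 * K}" by auto
    show "\<forall>i\<in>{(u, w). u + w < 2 * K} - {..<K} \<times> {..<K}. (case i of (u, w) \<Rightarrow> f u w) = 0"
      by (intro ballI) (auto intro!: z simp: not_less)
  qed
  also have "\<dots> = (\<Sum>i<2 * K. \<Sum>s\<le>i. f s (i - s))"
    by (rule sum.triangle_reindex)
  finally show ?thesis .
qed

lemma binom_exp:
  fixes a b :: "'k::field_char_0"
  shows "(a + b) ^ r / fact r = (\<Sum>s\<le>r. a ^ s / fact s * (b ^ (r - s) / fact (r - s)))"
proof -
  have "(a + b) ^ r / fact r = (\<Sum>s\<le>r. of_nat (r choose s) * a ^ s * b ^ (r - s) / fact r)"
    by (simp add: binomial_ring sum_divide_distrib)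
  also have "\<dots> = (\<Sum>s\<le>r. a ^ s / fact s * (b ^ (r - s) / fact (r - s)))"
  proof (rule sum.cong[OF refl])
    fix s assume "s \<in> {..r}"
    hence "s \<le> r" by simp
    hence "(of_nat (r choose s) :: 'k) = fact r / (fact s * fact (r - s))" by (rule binomial_fact)
    thus "of_nat (r choose s) * a ^ s * b ^ (r - s) / fact r = a ^ s / fact s * (b ^ (r - s) / fact (r - s))"
      by (simp add: field_simps)
  qed
  finally show ?thesis .
qed

lemma egf_shift:
  fixes a b :: "'k::field_char_0" and T :: "nat \<Rightarrow> 'k"
  assumes z: "\<And>r. K \<le> r \<Longrightarrow> T r = 0"
  shows "(\<Sum>r<K. (a + b) ^ r / fact r * T r) = (\<Sum>s<K. \<Sum>w<K. a ^ s / fact s * (b ^ w / fact w * T (s + w)))"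
proof -
  have "(\<Sum>r<K. (a + b) ^ r / fact r * T r) = (\<Sum>r<2 * K. (a + b) ^ r / fact r * T r)"
    by (rule sum_extend[symmetric]) (use z in auto)
  also have "\<dots> = (\<Sum>r<2 * K. \<Sum>s\<le>r. a ^ s / fact s * (b ^ (r - s) / fact (r - s) * T (s + (r - s))))"
    unfolding binom_exp by (auto simp: sum_distrib_right mult.assoc intro!: sum.cong)
  also have "\<dots> = (\<Sum>s<K. \<Sum>w<K. a ^ s / fact s * (b ^ w / fact w * T (s + w)))"
    by (rule tri_box[symmetric]) (use z in auto)
  finally show ?thesis .
qed

lemma egf_prod:
  fixes a :: "'k::field_char_0" and U :: "nat \<Rightarrow> nat \<Rightarrow> 'k"
  assumes z: "\<And>k s. K \<le> k \<or> K \<le> s \<Longrightarrow> U k s = 0"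
  shows "(\<Sum>k<K. a ^ k / fact k * (\<Sum>s<K. a ^ s / fact s * U k s)) =
    (\<Sum>i<2 * K. a ^ i / fact i * (\<Sum>s\<le>i. of_nat (i choose s) * U (i - s) s))"
proof -
  have "(\<Sum>k<K. a ^ k / fact k * (\<Sum>s<K. a ^ s / fact s * U k s)) =
      (\<Sum>s<K. \<Sum>k<K. a ^ k / fact k * (a ^ s / fact s * U k s))"
    unfolding sum_distrib_left by (rule sum.swap)
  also have "\<dots> = (\<Sum>i<2 * K. \<Sum>s\<le>i. a ^ (i - s) / fact (i - s) * (a ^ s / fact s * U (i - s) s))"
    by (rule tri_box) (use z in auto)
  also have "\<dots> = (\<Sum>i<2 * K. a ^ i / fact i * (\<Sum>s\<le>i. of_nat (i choose s) * U (i - s) s))"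
    unfolding sum_distrib_left
  proof (intro sum.cong refl)
    fix i s :: nat assume "s \<in> {..i}"
    hence si: "s \<le> i" by simp
    hence b: "(of_nat (i choose s) :: 'k) = fact i / (fact s * fact (i - s))" by (rule binomial_fact)
    have p: "a ^ i = a ^ (i - s) * a ^ s" using si by (simp add: power_add[symmetric])
    show "a ^ (i - s) / fact (i - s) * (a ^ s / fact s * U (i - s) s) =
        a ^ i / fact i * (of_nat (i choose s) * U (i - s) s)"
      unfolding b p by (simp add: field_simps)
  qed
  finally show ?thesis .
qed



lemma egf2_form:
  fixes F :: "nat \<Rightarrow> nat \<Rightarrow> 'k::field_char_0"
  shows "(\<Sum>j<N. l2 ^ j / fact j * (\<Sum>i<N. l1 ^ i / fact i * F i j)) =
    (\<Sum>j<N. \<Sum>i<N. F i j / (fact i * fact j) * l1 ^ i * l2 ^ j)"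
  unfolding sum_distrib_left by (intro sum.cong refl) (simp add: field_simps)

lemma egf2_form':
  fixes F :: "nat \<Rightarrow> nat \<Rightarrow> 'k::field_char_0"
  shows "(\<Sum>i<N. l1 ^ i / fact i * (\<Sum>j<N. l2 ^ j / fact j * F i j)) =
    (\<Sum>j<N. \<Sum>i<N. F i j / (fact i * fact j) * l1 ^ i * l2 ^ j)"
proof -
  have "(\<Sum>i<N. l1 ^ i / fact i * (\<Sum>j<N. l2 ^ j / fact j * F i j)) =
      (\<Sum>i<N. \<Sum>j<N. F i j / (fact i * fact j) * l1 ^ i * l2 ^ j)"
    unfolding sum_distrib_left by (intro sum.cong refl) (simp add: field_simps)
  also have "\<dots> = (\<Sum>j<N. \<Sum>i<N. F i j / (fact i * fact j) * l1 ^ i * l2 ^ j)"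
    by (rule sum.swap)
  finally show ?thesis .
qed

lemma box_extend:
  fixes G :: "nat \<Rightarrow> nat \<Rightarrow> 'a::comm_monoid_add"
  assumes "\<And>i j. K \<le> i \<or> K \<le> j \<Longrightarrow> G i j = 0" "K \<le> N"
  shows "(\<Sum>j<K. \<Sum>i<K. G i j) = (\<Sum>j<N. \<Sum>i<N. G i j)"
proof -
  have "(\<Sum>i<K. G i j) = (\<Sum>i<N. G i j)" for j
    by (rule sum_extend[symmetric]) (use assms in auto)
  hence "(\<Sum>j<K. \<Sum>i<K. G i j) = (\<Sum>j<K. \<Sum>i<N. G i j)" by simp
  also have "\<dots> = (\<Sum>j<N. \<Sum>i<N. G i j)"
  proof (rule sum_extend[symmetric])
    show "K \<le> N" by (rule assms(2))
    fix j assume "K \<le> j"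
    thus "(\<Sum>i<N. G i j) = 0" using assms(1) by simp
  qed
  finally show ?thesis .
qed

context
  fixes C :: "('k::field_char_0, 'c) conf_alg" and act
  assumes cm: "conf_module C act" and ac: "assoc_conf C"
begin

lemma mprod_zero_right: "mprod act n a 0 = 0"
  using mprod_lin_right(2)[OF cm, of n a 0 0] by simp

lemma mprod_zero_left: "mprod act n (czero C) p = 0"
  using mprod_lin_left(2)[OF cm, of n 0 a p] ks_zero_smul[OF ac_ax(1)[OF ac]] by simp

lemma Qa_zero: "Qa act (czero C) x l = 0"
proof -
  have "Qa act (cadd C (czero C) (czero C)) x l = Qa act (czero C) x l + Qa act (czero C) x l"
    by (rule Qa_props(2)[OF cm])
  hence "Qa act (czero C) x l = Qa act (czero C) x l + Qa act (czero C) x l"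
    by (simp only: ks_ax(3)[OF ac_ax(1)[OF ac]])
  thus ?thesis by simp
qed

lemma act_zero_elt: "act (czero C) (poly p) x l = 0"
  by (simp add: act_poly[OF cm] Qa_zero)

lemma act_poly_sum:
  "act a (poly (\<Sum>j\<in>A. smult (c j) (p j))) x l = (\<Sum>j\<in>A. c j * act a (poly (p j)) x l)"
  by (simp add: act_poly[OF cm] poly_sum sum_distrib_right sum_distrib_left mult_ac)

lemma mprod_assoc:
  "mprod act n a (mprod act m b q) =
     (\<Sum>i<Suc n. smult (of_nat (n choose i)) (mprod act (m + i) (cprod C (n - i) a b) q))"
proof -
  define K1 where "K1 = loc_bound C a b + mbound act b q + Suc n + Suc m"
  define K where "K = K1 + (\<Sum>j<K1. mbound act a (mprod act j b q)) + (\<Sum>k<K1. mbound act (cprod C k a b) q)"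
  have K1K: "K1 \<le> K" by (simp add: K_def)
  have nK: "n < K" "m < K" using K1K by (simp_all add: K1_def)
  have cz: "cprod C k a b = czero C" if "K1 \<le> k" for k
    by (rule lb_zero[OF ac]) (use that in \<open>simp add: K1_def\<close>)
  have bz: "mprod act j b q = 0" if "K1 \<le> j" for j
    by (rule mprod_vanish[OF cm]) (use that in \<open>simp add: K1_def\<close>)
  define L where "L i j = mprod act i a (mprod act j b q)" for i j
  define T where "T k r = mprod act r (cprod C k a b) q" for k r
  have bnd1: "mbound act a (mprod act j b q) \<le> K" if "j < K1" for j
  proof -
    have "mbound act a (mprod act j b q) \<le> (\<Sum>j<K1. mbound act a (mprod act j b q))"
      by (rule member_le_sum) (use that in auto)
    thus ?thesis by (simp add: K_def)
  qed
  have bnd2: "mbound act (cprod C k a b) q \<le> K" if "k < K1" for k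
  proof -
    have "mbound act (cprod C k a b) q \<le> (\<Sum>k<K1. mbound act (cprod C k a b) q)"
      by (rule member_le_sum) (use that in auto)
    thus ?thesis by (simp add: K_def)
  qed
  have Lz: "L i j = 0" if "K \<le> i \<or> K \<le> j" for i j
  proof (cases "K1 \<le> j")
    case True thus ?thesis by (simp add: L_def bz mprod_zero_right)
  next
    case False
    hence "K \<le> i" using that K1K by auto
    thus ?thesis unfolding L_def using bnd1[of j] False
      by (intro mprod_vanish[OF cm]) simp
  qed
  have Tz: "T k r = 0" if "K \<le> k \<or> K \<le> r" for k r
  proof (cases "K1 \<le> k")
    case True thus ?thesis by (simp add: T_def cz mprod_zero_left)
  next
    case False
    hence "K \<le> r" using that K1K by auto
    thus ?thesis unfolding T_def using bnd2[of k] False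
      by (intro mprod_vanish[OF cm]) simp
  qed
  define R where "R i j = (\<Sum>s\<le>i. smult (of_nat (i choose s)) (T (i - s) (s + j)))" for i j
  have main: "(\<Sum>j<2*K. \<Sum>i<2*K. (poly (L i j) x / (fact i * fact j)) * l1 ^ i * l2 ^ j) =
      (\<Sum>j<2*K. \<Sum>i<2*K. (poly (R i j) x / (fact i * fact j)) * l1 ^ i * l2 ^ j)" for x l1 l2
  proof -
    have E1: "act a (\<lambda>y. act b (poly q) y l2) x l1 =
        (\<Sum>k<K. l1 ^ k / fact k * act (cprod C k a b) (poly q) x (l1 + l2))"
      by (rule cm_ax(8)[OF cm poly1_poly]) (use cz K1K in auto)
    have E2: "(\<lambda>y. act b (poly q) y l2) = poly (\<Sum>j<K. smult (l2 ^ j / fact j) (mprod act j b q))"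
    proof
      fix y
      have "mbound act b q \<le> K" using K1K by (simp add: K1_def)
      thus "act b (poly q) y l2 = poly (\<Sum>j<K. smult (l2 ^ j / fact j) (mprod act j b q)) y"
        by (simp add: mprod_exp[OF cm] poly_sum)
    qed
    have E3: "act a (poly (mprod act j b q)) x l1 = (\<Sum>i<K. l1 ^ i / fact i * poly (L i j) x)" if "j < K" for j
    proof (cases "K1 \<le> j")
      case True thus ?thesis by (simp add: bz act_poly[OF cm] L_def mprod_zero_right)
    next
      case False
      thus ?thesis using bnd1[of j] by (simp add: mprod_exp[OF cm] L_def)
    qed
    have LHS: "act a (\<lambda>y. act b (poly q) y l2) x l1 =
        (\<Sum>j<2*K. \<Sum>i<2*K. (poly (L i j) x / (fact i * fact j)) * l1 ^ i * l2 ^ j)"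
    proof -
      have "act a (\<lambda>y. act b (poly q) y l2) x l1 = (\<Sum>j<K. l2 ^ j / fact j * act a (poly (mprod act j b q)) x l1)"
        unfolding E2 by (rule act_poly_sum)
      also have "\<dots> = (\<Sum>j<K. l2 ^ j / fact j * (\<Sum>i<K. l1 ^ i / fact i * poly (L i j) x))"
        by (intro sum.cong refl) (simp add: E3)
      also have "\<dots> = (\<Sum>j<K. \<Sum>i<K. (poly (L i j) x / (fact i * fact j)) * l1 ^ i * l2 ^ j)"
        by (rule egf2_form)
      also have "\<dots> = (\<Sum>j<2*K. \<Sum>i<2*K. (poly (L i j) x / (fact i * fact j)) * l1 ^ i * l2 ^ j)"
        by (rule box_extend) (use Lz in auto)
      finally show ?thesis .
    qed
    have E4: "act (cprod C k a b) (poly q) x s = (\<Sum>r<K. s ^ r / fact r * poly (T k r) x)" if "k < K" for k s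
    proof (cases "K1 \<le> k")
      case True thus ?thesis by (simp add: cz act_zero_elt T_def mprod_zero_left)
    next
      case False
      thus ?thesis using bnd2[of k] by (simp add: mprod_exp[OF cm] T_def)
    qed
    define U where "U k s = (\<Sum>w<K. l2 ^ w / fact w * poly (T k (s + w)) x)" for k s
    have Uz: "U k s = 0" if "K \<le> k \<or> K \<le> s" for k s
      unfolding U_def using Tz that by auto
    have RHS: "(\<Sum>k<K. l1 ^ k / fact k * act (cprod C k a b) (poly q) x (l1 + l2)) =
        (\<Sum>j<2*K. \<Sum>i<2*K. (poly (R i j) x / (fact i * fact j)) * l1 ^ i * l2 ^ j)"
    proof -
      have "(\<Sum>k<K. l1 ^ k / fact k * act (cprod C k a b) (poly q) x (l1 + l2)) =
          (\<Sum>k<K. l1 ^ k / fact k * (\<Sum>r<K. (l1 + l2) ^ r / fact r * poly (T k r) x))"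
        by (intro sum.cong refl) (simp add: E4)
      also have "\<dots> = (\<Sum>k<K. l1 ^ k / fact k * (\<Sum>s<K. l1 ^ s / fact s * U k s))"
      proof (rule sum.cong[OF refl])
        fix k
        have "(\<Sum>r<K. (l1 + l2) ^ r / fact r * poly (T k r) x) =
            (\<Sum>s<K. \<Sum>w<K. l1 ^ s / fact s * (l2 ^ w / fact w * poly (T k (s + w)) x))"
          by (rule egf_shift) (use Tz in auto)
        also have "\<dots> = (\<Sum>s<K. l1 ^ s / fact s * U k s)"
          by (simp add: U_def sum_distrib_left)
        finally show "l1 ^ k / fact k * (\<Sum>r<K. (l1 + l2) ^ r / fact r * poly (T k r) x) =
            l1 ^ k / fact k * (\<Sum>s<K. l1 ^ s / fact s * U k s)" by simp
      qed
      also have "\<dots> = (\<Sum>i<2 * K. l1 ^ i / fact i * (\<Sum>s\<le>i. of_nat (i choose s) * U (i - s) s))"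
        by (rule egf_prod) (rule Uz)
      also have "\<dots> = (\<Sum>i<2 * K. l1 ^ i / fact i * (\<Sum>j<2 * K. l2 ^ j / fact j * poly (R i j) x))"
      proof (rule sum.cong[OF refl])
        fix i
        have "(\<Sum>s\<le>i. of_nat (i choose s) * U (i - s) s) =
            (\<Sum>s\<le>i. \<Sum>w<K. l2 ^ w / fact w * (of_nat (i choose s) * poly (T (i - s) (s + w)) x))"
          by (simp add: U_def sum_distrib_left mult_ac)
        also have "\<dots> = (\<Sum>w<K. \<Sum>s\<le>i. l2 ^ w / fact w * (of_nat (i choose s) * poly (T (i - s) (s + w)) x))"
          by (rule sum.swap)
        also have "\<dots> = (\<Sum>w<K. l2 ^ w / fact w * poly (R i w) x)"
          by (simp add: R_def poly_sum sum_distrib_left)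
        also have "\<dots> = (\<Sum>j<2 * K. l2 ^ j / fact j * poly (R i j) x)"
        proof (rule sum_extend[symmetric])
          show "K \<le> 2 * K" by simp
          fix j assume "K \<le> j"
          hence "R i j = 0" unfolding R_def using Tz by simp
          thus "l2 ^ j / fact j * poly (R i j) x = 0" by simp
        qed
        finally show "l1 ^ i / fact i * (\<Sum>s\<le>i. of_nat (i choose s) * U (i - s) s) =
            l1 ^ i / fact i * (\<Sum>j<2 * K. l2 ^ j / fact j * poly (R i j) x)" by simp
      qed
      also have "\<dots> = (\<Sum>j<2*K. \<Sum>i<2*K. (poly (R i j) x / (fact i * fact j)) * l1 ^ i * l2 ^ j)"
        by (rule egf2_form')
      finally show ?thesis .
    qed
    show ?thesis using E1 LHS RHS by simp
  qed
  have "poly (L n m) x / (fact n * fact m) = poly (R n m) x / (fact n * fact m)" for x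
    by (rule coeffs_eq2[where c = "\<lambda>i j. poly (L i j) x / (fact i * fact j)"
          and d = "\<lambda>i j. poly (R i j) x / (fact i * fact j)", OF main]) (use nK in auto)
  hence "poly (L n m) x = poly (R n m) x" for x by (simp add: field_simps)
  hence "L n m = R n m" by (simp add: poly_eq_poly_eq_iff[symmetric] fun_eq_iff)
  thus ?thesis unfolding L_def R_def T_def
    by (simp add: lessThan_Suc_atMost add.commute)
qed

end



lemma poly_card_le:
  assumes "infinite (UNIV::'k set)"
  shows "(card_of (UNIV::'k::zero poly set), card_of (UNIV::'k set)) \<in> ordLeq"
proof -
  define D where "D n = {p::'k poly. degree p \<le> n}" for n
  have Dn: "(card_of (D n), card_of (UNIV::'k set)) \<in> ordLeq" for n
  proof (induction n)
    case 0
    have "D 0 \<subseteq> (\<lambda>c. [:c:]) ` UNIV" unfolding D_def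
      by (auto simp: image_iff intro!: exI[of _ "coeff _ 0"] degree_0_id[symmetric])
    hence "(card_of (D 0), card_of ((\<lambda>c. [:c:]) ` (UNIV::'k set))) \<in> ordLeq"
      by (rule card_of_mono1)
    moreover have "(card_of ((\<lambda>c. [:c:]) ` (UNIV::'k set)), card_of (UNIV::'k set)) \<in> ordLeq"
      by (rule card_of_image)
    ultimately show ?case using ordLeq_transitive by blast
  next
    case (Suc n)
    have "D (Suc n) \<subseteq> (\<lambda>(c,q). pCons c q) ` ((UNIV::'k set) \<times> D n)"
    proof
      fix p assume "p \<in> D (Suc n)"
      obtain a q where pq: "p = pCons a q" by (cases p)
      with \<open>p \<in> D (Suc n)\<close> have "q \<in> D n" unfolding D_def
        by (auto simp: degree_pCons_eq_if split: if_splits)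
      thus "p \<in> (\<lambda>(c,q). pCons c q) ` ((UNIV::'k set) \<times> D n)" using pq by force
    qed
    hence "(card_of (D (Suc n)), card_of ((\<lambda>(c,q). pCons c q) ` ((UNIV::'k set) \<times> D n))) \<in> ordLeq"
      by (rule card_of_mono1)
    moreover have "(card_of ((\<lambda>(c,q). pCons c q) ` ((UNIV::'k set) \<times> D n)), card_of ((UNIV::'k set) \<times> D n)) \<in> ordLeq"
      by (rule card_of_image)
    moreover have "(card_of ((UNIV::'k set) \<times> D n), card_of ((UNIV::'k set) \<times> (UNIV::'k set))) \<in> ordLeq"
      using Suc card_of_Times_mono2 by blast
    moreover have "(card_of ((UNIV::'k set) \<times> (UNIV::'k set)), card_of (UNIV::'k set)) \<in> ordIso"
      using card_of_Times_same_infinite[OF assms] by blast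
    ultimately show ?case
      by (meson ordLeq_transitive ordLeq_ordIso_trans)
  qed
  have "UNIV = (\<Union>n\<in>(UNIV::nat set). D n)" unfolding D_def by auto
  moreover have "(card_of (\<Union>n\<in>(UNIV::nat set). D n), card_of (UNIV::'k set)) \<in> ordLeq"
    apply (rule card_of_UNION_ordLeq_infinite[OF assms])
    using assms infinite_iff_card_of_nat apply blast
    using Dn by blast
  ultimately show ?thesis by simp
qed

lemma exists_bij:
  fixes C :: "('k::field_char_0, 'c) conf_alg"
  assumes ks: "kspace C" and v: "v \<noteq> czero C"
  shows "\<exists>e :: 'c \<times> 'k poly \<Rightarrow> 'c. bij e"
proof -
  have inj: "inj (\<lambda>r. csmul C r v)" using ks_smul_inj[OF ks v] by (auto simp: inj_def)
  have kc: "(card_of (UNIV::'k set), card_of (UNIV::'c set)) \<in> ordLeq"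
    using inj card_of_ordLeq[of "UNIV::'k set" "UNIV::'c set"] by blast
  have infk: "infinite (UNIV::'k set)" by (rule infinite_UNIV_char_0)
  have infc: "infinite (UNIV::'c set)"
  proof
    assume "finite (UNIV::'c set)"
    hence "finite (range (\<lambda>r. csmul C r v))" by (rule finite_subset[rotated]) simp
    hence "finite (UNIV::'k set)" using inj by (simp add: finite_image_iff)
    thus False using infk by blast
  qed
  have pc: "(card_of (UNIV::'k poly set), card_of (UNIV::'c set)) \<in> ordLeq"
    using poly_card_le[OF infk] kc ordLeq_transitive by blast
  have "(card_of ((UNIV::'c set) \<times> (UNIV::'k poly set)), card_of (UNIV::'c set)) \<in> ordIso"
    using card_of_Times_infinite[OF infc _ pc] by blast
  then obtain f where "bij_betw f ((UNIV::'c set) \<times> (UNIV::'k poly set)) (UNIV::'c set)"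
    using card_of_ordIso by blast
  hence "bij f" by simp
  thus ?thesis by blast
qed

definition SD :: "('k::field_char_0, 'c) conf_alg \<Rightarrow> ('c \<Rightarrow> ('k \<Rightarrow> 'k) \<Rightarrow> 'k \<Rightarrow> 'k \<Rightarrow> 'k) \<Rightarrow>
    ('k, 'c \<times> 'k poly) conf_alg" where
  "SD C act = \<lparr>cadd = (\<lambda>x y. (cadd C (fst x) (fst y), snd x + snd y)),
     czero = (czero C, 0),
     cneg = (\<lambda>x. (cneg C (fst x), - snd x)),
     csmul = (\<lambda>r x. (csmul C r (fst x), smult r (snd x))),
     cder = (\<lambda>x. (cder C (fst x), pCons 0 (snd x))),
     cprod = (\<lambda>n x y. (cprod C n (fst x) (fst y), mprod act n (fst x) (snd y)))\<rparr>"

lemma SD_simps: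
  "cadd (SD C act) x y = (cadd C (fst x) (fst y), snd x + snd y)"
  "czero (SD C act) = (czero C, 0)"
  "cneg (SD C act) x = (cneg C (fst x), - snd x)"
  "csmul (SD C act) r x = (csmul C r (fst x), smult r (snd x))"
  "cder (SD C act) x = (cder C (fst x), pCons 0 (snd x))"
  "cprod (SD C act) n x y = (cprod C n (fst x) (fst y), mprod act n (fst x) (snd y))"
  by (simp_all add: SD_def)

lemma csumn_SD:
  "csumn (SD C act) f k = (csumn C (\<lambda>i. fst (f i)) k, \<Sum>i<k. snd (f i))"
  by (induction k) (simp_all add: SD_simps)

lemma SD_assoc_conf:
  assumes cm: "conf_module C act" and ac: "assoc_conf C"
  shows "assoc_conf (SD C act)"
proof -
  have ks: "kspace C" by (rule ac_ax(1)[OF ac])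
  note K = ks_ax[OF ks]
  note A = ac_ax[OF ac]
  have "kspace (SD C act)"
    unfolding kspace_def SD_simps
    apply (intro conjI allI)
           apply (simp add: K(1) add.assoc)
          apply (simp add: K(2) add.commute)
         apply (simp_all add: K(3-8) smult_add_right smult_add_left)
    done
  moreover have "\<exists>N. \<forall>n\<ge>N. cprod (SD C act) n a b = czero (SD C act)" for a b
  proof -
    obtain N where N: "\<forall>n\<ge>N. cprod C n (fst a) (fst b) = czero C" using A(8) by blast
    show ?thesis
      by (rule exI[of _ "N + mbound act (fst a) (snd b)"])
        (auto simp: SD_simps N mprod_vanish[OF cm])
  qed
  ultimately show ?thesis
    unfolding assoc_conf_def
    by (simp add: SD_simps csumn_SD A mprod_lin_left[OF cm] mprod_lin_right[OF cm]
        mprod_der_left[OF cm] mprod_der_right[OF cm] mprod_assoc[OF cm ac] smult_pCons)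
qed

definition TR :: "('d \<Rightarrow> 'c) \<Rightarrow> ('c \<Rightarrow> 'd) \<Rightarrow> ('k, 'd) conf_alg \<Rightarrow> ('k, 'c) conf_alg" where
  "TR e e' B = \<lparr>cadd = (\<lambda>a b. e (cadd B (e' a) (e' b))),
     czero = e (czero B),
     cneg = (\<lambda>a. e (cneg B (e' a))),
     csmul = (\<lambda>r a. e (csmul B r (e' a))),
     cder = (\<lambda>a. e (cder B (e' a))),
     cprod = (\<lambda>n a b. e (cprod B n (e' a) (e' b)))\<rparr>"

lemma TR_simps:
  "cadd (TR e e' B) a b = e (cadd B (e' a) (e' b))"
  "czero (TR e e' B) = e (czero B)"
  "cneg (TR e e' B) a = e (cneg B (e' a))"
  "csmul (TR e e' B) r a = e (csmul B r (e' a))"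
  "cder (TR e e' B) a = e (cder B (e' a))"
  "cprod (TR e e' B) n a b = e (cprod B n (e' a) (e' b))"
  by (simp_all add: TR_def)

context
  fixes e :: "'d \<Rightarrow> 'c" and e' :: "'c \<Rightarrow> 'd"
  assumes ee: "\<And>z. e' (e z) = z" and ee': "\<And>a. e (e' a) = a"
begin

lemma csumn_TR: "csumn (TR e e' B) f k = e (csumn B (\<lambda>i. e' (f i)) k)"
  by (induction k) (simp_all add: TR_simps ee)

lemma e_inj: "(e x = e y) = (x = y)"
  by (metis ee)

lemma TR_assoc_conf:
  assumes ac: "assoc_conf (B :: ('k::field_char_0, 'd) conf_alg)"
  shows "assoc_conf (TR e e' B)"
proof -
  have ks: "kspace B" by (rule ac_ax(1)[OF ac])
  note K = ks_ax[OF ks]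
  note A = ac_ax[OF ac]
  have "kspace (TR e e' B)"
    unfolding kspace_def TR_simps
    apply (intro conjI allI)
           apply (simp add: ee K(1))
          apply (simp add: K(2))
         apply (simp_all add: ee ee' K(3-8))
    done
  moreover have "\<exists>N. \<forall>n\<ge>N. cprod (TR e e' B) n a b = czero (TR e e' B)" for a b
  proof -
    obtain N where N: "\<forall>n\<ge>N. cprod B n (e' a) (e' b) = czero B" using A(8)[of "e' a" "e' b"] by blast
    show ?thesis by (rule exI[of _ N]) (simp add: TR_simps N)
  qed
  ultimately show ?thesis
    unfolding assoc_conf_def by (simp add: TR_simps csumn_TR ee ee' A)
qed

lemma TR_rels:
  assumes "U3_rels B w"
  shows "U3_rels (TR e e' B) (e w)"
  using assms unfolding U3_rels_def by (simp add: TR_simps ee)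

end

lemma module_hom_exists:
  fixes C :: "('k::field_char_0, 'c) conf_alg"
  assumes U: "is_U3 C v" and cm: "conf_module C act"
    and r1: "\<forall>n\<ge>3. mprod act n v m0 = 0"
    and r2: "smult 2 (mprod act 1 v m0) + - pCons 0 (mprod act 2 v m0) = smult 2 m0"
  shows "\<exists>G. (\<forall>a b. G (cadd C a b) = G a + G b) \<and> (\<forall>r a. G (csmul C r a) = smult r (G a)) \<and>
    (\<forall>a. G (cder C a) = pCons 0 (G a)) \<and> (\<forall>n a b. G (cprod C n a b) = mprod act n a (G b)) \<and> G v = m0"
proof -
  have ac: "assoc_conf C" and rels: "U3_rels C v" and vnz: "v \<noteq> czero C"
    and univ: "\<forall>(A::('k, 'c) conf_alg) w. assoc_conf A \<and> U3_rels A w \<longrightarrow> (\<exists>!f. conf_hom C A f \<and> f v = w)"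
    using U unfolding is_U3_def by blast+
  obtain e :: "'c \<times> 'k poly \<Rightarrow> 'c" where "bij e" using exists_bij[OF ac_ax(1)[OF ac] vnz] by blast
  define e' where "e' = inv e"
  have ee: "e' (e z) = z" for z using \<open>bij e\<close> by (simp add: e'_def bij_def inv_f_f)
  have ee': "e (e' a) = a" for a using \<open>bij e\<close> by (simp add: e'_def bij_def surj_f_inv_f)
  define A where "A = TR e e' (SD C act)"
  have acA: "assoc_conf A" unfolding A_def
    by (rule TR_assoc_conf[OF ee ee' SD_assoc_conf[OF cm ac]])
  have relsSD: "U3_rels (SD C act) (v, m0)"
    using rels r1 r2 unfolding U3_rels_def by (simp add: SD_simps)
  have relsA: "U3_rels A (e (v, m0))" unfolding A_def by (rule TR_rels[OF ee ee' relsSD])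
  obtain h where h: "conf_hom C A h" "h v = e (v, m0)" using univ acA relsA by blast
  define H where "H a = e' (h a)" for a
  have Hadd: "H (cadd C a b) = cadd (SD C act) (H a) (H b)" for a b
    using h(1) unfolding conf_hom_def H_def A_def by (simp add: TR_simps ee)
  have Hsmul: "H (csmul C r a) = csmul (SD C act) r (H a)" for r a
    using h(1) unfolding conf_hom_def H_def A_def by (simp add: TR_simps ee)
  have Hder: "H (cder C a) = cder (SD C act) (H a)" for a
    using h(1) unfolding conf_hom_def H_def A_def by (simp add: TR_simps ee)
  have Hprod: "H (cprod C n a b) = cprod (SD C act) n (H a) (H b)" for n a b
    using h(1) unfolding conf_hom_def H_def A_def by (simp add: TR_simps ee)
  have Hv: "H v = (v, m0)" by (simp add: H_def h(2) ee)
  have "conf_hom C C (\<lambda>a. fst (H a))"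
    unfolding conf_hom_def by (simp add: Hadd Hsmul Hder Hprod SD_simps)
  moreover have "conf_hom C C (\<lambda>a. a)" unfolding conf_hom_def by simp
  moreover have "\<exists>!f. conf_hom C C f \<and> f v = v" using univ ac rels by blast
  ultimately have "(\<lambda>a. fst (H a)) = (\<lambda>a. a)" using Hv by (metis fst_conv)
  hence fstH: "fst (H a) = a" for a by (metis)
  define G where "G a = snd (H a)" for a
  have "(\<forall>a b. G (cadd C a b) = G a + G b) \<and> (\<forall>r a. G (csmul C r a) = smult r (G a)) \<and>
    (\<forall>a. G (cder C a) = pCons 0 (G a)) \<and> (\<forall>n a b. G (cprod C n a b) = mprod act n a (G b)) \<and> G v = m0"
    by (simp add: G_def Hadd Hsmul Hder Hprod SD_simps fstH Hv)
  thus ?thesis by blast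
qed



lemma phiG_Z1:
  fixes C :: "('k::field_char_0, 'c) conf_alg"
  assumes cm: "conf_module C act" and ac: "assoc_conf C"
    and Gadd: "\<And>a b. G (cadd C a b) = G a + G b"
    and Gsmul: "\<And>r a. G (csmul C r a) = smult r (G a)"
    and Gder: "\<And>a. G (cder C a) = pCons 0 (G a)"
    and Gprod: "\<And>n a b. G (cprod C n a b) = mprod act n a (G b)"
  shows "(\<lambda>a x l. poly (G a) (- l)) \<in> Z1 C act"
proof -
  define \<phi> where "\<phi> a x l = poly (G a) (- l)" for a and x l :: 'k
  have ks: "kspace C" by (rule ac_ax(1)[OF ac])
  have G0: "G (czero C) = 0"
  proof -
    have "G (cadd C (czero C) (czero C)) = G (czero C) + G (czero C)" by (rule Gadd)
    thus ?thesis by (simp add: ks_ax(3)[OF ks])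
  qed
  have c1: "cochain1 C \<phi>"
    unfolding cochain1_def \<phi>_def
    by (simp add: Gadd Gsmul Gder, intro allI poly2_comp_poly poly2_minus poly2_l)
  have "\<exists>D. poly3 D \<and> (\<forall>x l1 l2. Qa act a x l1 - Qa act a (- l1 - l2) l1 = (x + l1 + l2) * D x l1 l2)" for a
    by (rule ddiff3[OF Qa_props(1)[OF cm]])
  then obtain D where D: "\<And>a. poly3 (D a)"
    "\<And>a x l1 l2. Qa act a x l1 - Qa act a (- l1 - l2) l1 = (x + l1 + l2) * D a x l1 l2"
    by metis
  have pD: "poly1 (\<lambda>x. D a x l1 l2)" for a l1 l2 by (rule poly3_fix[OF D(1)])
  have canc: "A x = B x" if "poly1 A" "poly1 B" "\<And>x. (x + l1 + l2) * A x = (x + l1 + l2) * B x" for A B :: "'k \<Rightarrow> 'k" and x l1 l2 :: 'k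
    by (rule cancel_lin[where y = "- l1 - l2", OF that(1,2)]) (use that(3) in \<open>simp add: algebra_simps\<close>)
  have Dadd: "D (cadd C a a') x l1 l2 = D a x l1 l2 + D a' x l1 l2" for a a' x l1 l2
  proof (rule canc[OF pD poly1_add[OF pD pD]])
    fix x
    show "(x + l1 + l2) * D (cadd C a a') x l1 l2 = (x + l1 + l2) * (D a x l1 l2 + D a' x l1 l2)"
      unfolding distrib_left D(2)[symmetric] by (simp add: Qa_props(2)[OF cm])
  qed
  have Dsmul: "D (csmul C r a) x l1 l2 = r * D a x l1 l2" for r a x l1 l2
  proof (rule canc[OF pD poly1_mult[OF poly1_const pD]])
    fix x
    have "(x + l1 + l2) * (r * D a x l1 l2) = r * ((x + l1 + l2) * D a x l1 l2)" by (simp add: mult_ac)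
    thus "(x + l1 + l2) * D (csmul C r a) x l1 l2 = (x + l1 + l2) * (r * D a x l1 l2)"
      unfolding D(2)[symmetric] by (simp add: Qa_props(3)[OF cm] right_diff_distrib)
  qed
  have Dder: "D (cder C a) x l1 l2 = - l1 * D a x l1 l2" for a x l1 l2
  proof (rule canc[OF pD poly1_mult[OF poly1_const pD]])
    fix x
    have "(x + l1 + l2) * (- l1 * D a x l1 l2) = - l1 * ((x + l1 + l2) * D a x l1 l2)" by (simp add: mult_ac)
    thus "(x + l1 + l2) * D (cder C a) x l1 l2 = (x + l1 + l2) * (- l1 * D a x l1 l2)"
      unfolding D(2)[symmetric] by (simp add: Qa_props(4)[OF cm] right_diff_distrib)
  qed
  define \<chi> where "\<chi> a b x l1 l2 = poly (G b) (- l2) * D a x l1 l2" for a b and x l1 l2 :: 'k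
  have c2: "cochain2 C \<chi>"
    unfolding cochain2_def
  proof (intro conjI allI)
    show "poly3 (\<chi> a b)" for a b unfolding \<chi>_def
      by (intro poly3_mult D(1) poly3_comp_poly poly3_minus poly3_l2)
  qed (simp_all add: \<chi>_def Gadd Gsmul Gder Dadd Dsmul Dder algebra_simps)
  have hd: "hd1 C act \<phi> a b x l1 l2 = (x + l1 + l2) * \<chi> a b x l1 l2" for a b x l1 l2
  proof -
    define N where "N = loc_bound C a b + mbound act a (G b)"
    have first: "act a (\<lambda>y. \<phi> b y l2) x l1 = poly (G b) (- l2) * Qa act a x l1"
      unfolding \<phi>_def by (rule act_poly1[OF cm poly1_const])
    have "(\<Sum>n<loc_bound C a b. l1 ^ n / fact n * \<phi> (cprod C n a b) x (l1 + l2)) =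
        (\<Sum>n<N. l1 ^ n / fact n * poly (mprod act n a (G b)) (- l1 - l2))"
    proof -
      have "(\<Sum>n<N. l1 ^ n / fact n * \<phi> (cprod C n a b) x (l1 + l2)) =
          (\<Sum>n<loc_bound C a b. l1 ^ n / fact n * \<phi> (cprod C n a b) x (l1 + l2))"
        by (rule sum_extend) (auto simp: N_def \<phi>_def lb_zero[OF ac] G0)
      thus ?thesis by (simp add: \<phi>_def Gprod)
    qed
    also have "\<dots> = act a (poly (G b)) (- l1 - l2) l1"
      by (rule mprod_exp[OF cm, symmetric]) (simp add: N_def)
    also have "\<dots> = poly (G b) (- l2) * Qa act a (- l1 - l2) l1"
      by (simp add: act_poly[OF cm])
    finally have second: "(\<Sum>n<loc_bound C a b. l1 ^ n / fact n * \<phi> (cprod C n a b) x (l1 + l2)) =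
        poly (G b) (- l2) * Qa act a (- l1 - l2) l1" .
    have "poly (G b) (- l2) * Qa act a x l1 - poly (G b) (- l2) * Qa act a (- l1 - l2) l1 =
        poly (G b) (- l2) * (Qa act a x l1 - Qa act a (- l1 - l2) l1)"
      by (rule right_diff_distrib[symmetric])
    also have "\<dots> = poly (G b) (- l2) * ((x + l1 + l2) * D a x l1 l2)" by (simp only: D(2))
    also have "\<dots> = (x + l1 + l2) * (poly (G b) (- l2) * D a x l1 l2)" by (simp only: mult_ac)
    finally show ?thesis unfolding hd1_def first second \<chi>_def .
  qed
  have "\<phi> \<in> Z1 C act" unfolding Z1_def using c1 c2 hd by blast
  moreover have "\<phi> = (\<lambda>a x l. poly (G a) (- l))" by (simp add: fun_eq_iff \<phi>_def)
  ultimately show ?thesis by simp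
qed



lemma RC_add:
  assumes "RC C act g1" "RC C act g2"
  shows "RC C act (\<lambda>a t. g1 a t + g2 a t)"
  unfolding RC_def
proof (intro conjI allI)
  note A = assms[unfolded RC_def]
  show "g1 (cadd C a b) t + g2 (cadd C a b) t = g1 a t + g2 a t + (g1 b t + g2 b t)" for a b t
    using A by simp
  show "g1 (csmul C r a) t + g2 (csmul C r a) t = r * (g1 a t + g2 a t)" for r a t
    using A by (simp add: distrib_left)
  show "g1 (cder C a) t + g2 (cder C a) t = - t * (g1 a t + g2 a t)" for a t
    using A by (simp add: distrib_left)
  show "(g1 b l2 + g2 b l2) * Qa act a (- l1 - l2) l1 =
    (\<Sum>n<loc_bound C a b. l1 ^ n / fact n * (g1 (cprod C n a b) (l1 + l2) + g2 (cprod C n a b) (l1 + l2)))"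
    for a b l1 l2
    using A by (simp add: distrib_left distrib_right sum.distrib)
qed

lemma cochain1_comb:
  assumes "cochain1 C f" "cochain1 C g" "cochain1 C h"
  shows "cochain1 C (\<lambda>a x l. f a x l - (c1 * g a x l + c2 * h a x l))"
  unfolding cochain1_def
proof (intro conjI allI)
  note F = c1_ax[OF assms(1)] and G = c1_ax[OF assms(2)] and H = c1_ax[OF assms(3)]
  show "poly2 (\<lambda>x l. f a x l - (c1 * g a x l + c2 * h a x l))" for a
    by (intro poly2_intros F(1) G(1) H(1))
qed (simp_all add: c1_ax[OF assms(1)] c1_ax[OF assms(2)] c1_ax[OF assms(3)] algebra_simps)

lemma special_case:
  fixes C :: "('k::field_char_0, 'c) conf_alg" and v :: 'c
    and act :: "'c \<Rightarrow> ('k \<Rightarrow> 'k) \<Rightarrow> 'k \<Rightarrow> 'k \<Rightarrow> 'k"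
    and \<alpha> \<Delta> :: 'k
  assumes U: "is_U3 C v"
    and cm: "conf_module C act"
    and Qv0: "\<forall>x l. act v (\<lambda>_. 1) x l = \<alpha> + x + \<Delta> * l"
    and D1: "\<Delta> = 1" and A0: "\<alpha> = 0"
  shows "H1_dim_eq C act 2"
proof -
  have ac: "assoc_conf C" and rels: "U3_rels C v" and gen: "conf_generates C v"
    using U unfolding is_U3_def by blast+
  have Qv: "Qa act v x l = x + l" for x l using Qv0 D1 A0 unfolding Qa_def by simp
  define q1 where "q1 n = (if n = 0 then [:0, 1:] else [:1:] :: 'k poly)" for n :: nat
  have m1: "mprod act n v [:1:] = (if n < 2 then q1 n else 0)" for n
  proof (rule mprod_char[OF cm])
    fix x l :: 'k
    show "act v (poly [:1:]) x l = (\<Sum>n<2. l ^ n / fact n * poly (q1 n) x)"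
      by (simp add: act_poly[OF cm] Qv q1_def numeral_2_eq_2)
  qed
  define q2 where "q2 n = (if n = 0 then [:0, 0, 1:] else if n = 1 then [:0, 2:] else [:2:] :: 'k poly)" for n :: nat
  have m2: "mprod act n v [:0, 1:] = (if n < 3 then q2 n else 0)" for n
  proof (rule mprod_char[OF cm])
    fix x l :: 'k
    show "act v (poly [:0, 1:]) x l = (\<Sum>n<3. l ^ n / fact n * poly (q2 n) x)"
      unfolding sum3 by (simp add: act_poly[OF cm] Qv q2_def algebra_simps power2_eq_square)
  qed
  obtain G1 where G1: "\<forall>a b. G1 (cadd C a b) = G1 a + G1 b" "\<forall>r a. G1 (csmul C r a) = smult r (G1 a)"
    "\<forall>a. G1 (cder C a) = pCons 0 (G1 a)" "\<forall>n a b. G1 (cprod C n a b) = mprod act n a (G1 b)" "G1 v = [:1:]"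
    using module_hom_exists[OF U cm, of "[:1:]"] m1 by (auto simp: q1_def)
  obtain G2 where G2: "\<forall>a b. G2 (cadd C a b) = G2 a + G2 b" "\<forall>r a. G2 (csmul C r a) = smult r (G2 a)"
    "\<forall>a. G2 (cder C a) = pCons 0 (G2 a)" "\<forall>n a b. G2 (cprod C n a b) = mprod act n a (G2 b)" "G2 v = [:0, 1:]"
    using module_hom_exists[OF U cm, of "[:0, 1:]"] m2 by (auto simp: q2_def)
  define \<phi>1 where "\<phi>1 = (\<lambda>a (x::'k) (l::'k). poly (G1 a) (- l))"
  define \<phi>2 where "\<phi>2 = (\<lambda>a (x::'k) (l::'k). poly (G2 a) (- l))"
  have Z1: "\<phi>1 \<in> Z1 C act" unfolding \<phi>1_def by (rule phiG_Z1[OF cm ac]) (use G1 in auto)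
  have Z2: "\<phi>2 \<in> Z1 C act" unfolding \<phi>2_def by (rule phiG_Z1[OF cm ac]) (use G2 in auto)
  have r1: "\<phi>1 v x l = 1" for x l by (simp add: \<phi>1_def G1(5))
  have r2: "\<phi>2 v x l = - l" for x l by (simp add: \<phi>2_def G2(5))
  have ne: "\<phi>1 \<noteq> \<phi>2"
  proof
    assume "\<phi>1 = \<phi>2"
    hence "\<phi>1 v 0 0 = \<phi>2 v 0 0" by simp
    thus False using r1 r2 by simp
  qed
  have sumS: "(\<Sum>s\<in>{\<phi>1, \<phi>2}. c s * s a x l) = c \<phi>1 * \<phi>1 a x l + c \<phi>2 * \<phi>2 a x l" for c a x l
    using ne by simp
  have fin: "finite {\<phi>1, \<phi>2}" by simp
  have card: "card {\<phi>1, \<phi>2} = 2" using ne by simp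
  have sub: "{\<phi>1, \<phi>2} \<subseteq> Z1 C act" using Z1 Z2 by blast
  have ind: "\<forall>c. (\<lambda>a x l. \<Sum>s\<in>{\<phi>1, \<phi>2}. c s * s a x l) \<in> B1 C act \<longrightarrow> (\<forall>s\<in>{\<phi>1, \<phi>2}. c s = 0)"
  proof (intro allI impI)
    fix c
    assume B: "(\<lambda>a x l. \<Sum>s\<in>{\<phi>1, \<phi>2}. c s * s a x l) \<in> B1 C act"
    obtain m \<psi> where m: "poly1 m" and eq: "\<And>a x l. (\<Sum>s\<in>{\<phi>1, \<phi>2}. c s * s a x l) = hd0 act m a x l + (x + l) * \<psi> a x l"
      using B unfolding B1_def by blast
    have "c \<phi>1 - c \<phi>2 * t = 0" for t
    proof -
      have "(\<Sum>s\<in>{\<phi>1, \<phi>2}. c s * s v (- t) t) = hd0 act m v (- t) t + (- t + t) * \<psi> v (- t) t"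
        by (rule eq)
      also have "\<dots> = 0" by (simp add: hd0_def act_poly1[OF cm m] Qv)
      finally show ?thesis by (simp add: sumS r1 r2)
    qed
    from this[of 0] this[of 1] have "c \<phi>1 = 0" "c \<phi>2 = 0" by simp_all
    thus "\<forall>s\<in>{\<phi>1, \<phi>2}. c s = 0" by simp
  qed
  have span: "\<forall>\<phi>\<in>Z1 C act. \<exists>c. (\<lambda>a x l. \<phi> a x l - (\<Sum>s\<in>{\<phi>1, \<phi>2}. c s * s a x l)) \<in> B1 C act"
  proof
    fix \<phi> assume Z: "\<phi> \<in> Z1 C act"
    have c1: "cochain1 C \<phi>" using Z unfolding Z1_def by blast
    have rc: "RC C act (\<lambda>a t. \<phi> a (- t) t)" by (rule Z1_RC[OF cm ac Z])
    have QvD: "Qa act v x l = \<alpha> + x + \<Delta> * l" for x l using Qv D1 A0 by simp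
    have D0: "\<Delta> \<noteq> 0" using D1 by simp
    obtain p0 p1 where pl: "\<And>t. \<phi> v (- t) t = p0 + p1 * t"
      using red_v_linear[OF ac rels QvD D0 rc poly2_diag[OF c1_ax(1)[OF c1]]] by blast
    define c where "c s = (if s = \<phi>1 then p0 else - p1)" for s :: "'c \<Rightarrow> 'k \<Rightarrow> 'k \<Rightarrow> 'k"
    have cc: "c \<phi>1 = p0" "c \<phi>2 = - p1" using ne by (simp_all add: c_def)
    have feq: "(\<lambda>a x l. \<phi> a x l - (\<Sum>s\<in>{\<phi>1, \<phi>2}. c s * s a x l)) =
        (\<lambda>a x l. \<phi> a x l - (p0 * \<phi>1 a x l + - p1 * \<phi>2 a x l))"
      by (simp only: sumS cc)
    have c1s: "cochain1 C \<phi>1" "cochain1 C \<phi>2" using Z1 Z2 unfolding Z1_def by blast+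
    have "(\<lambda>a x l. \<phi> a x l - (p0 * \<phi>1 a x l + - p1 * \<phi>2 a x l)) \<in> B1 C act"
    proof (rule in_B1[OF cm ac cochain1_comb[OF c1 c1s] poly1_const])
      have rcg: "RC C act (\<lambda>a t. \<phi> a (- t) t - (p0 * \<phi>1 a (- t) t + - p1 * \<phi>2 a (- t) t))"
        by (intro RC_diff[OF rc] RC_add RC_scale Z1_RC[OF cm ac Z1] Z1_RC[OF cm ac Z2])
      fix a t
      have "\<phi> a (- t) t - (p0 * \<phi>1 a (- t) t + - p1 * \<phi>2 a (- t) t) = 0"
        by (rule RC_unique[OF ac gen rcg]) (simp add: pl r1 r2)
      thus "\<phi> a (- t) t - (p0 * \<phi>1 a (- t) t + - p1 * \<phi>2 a (- t) t) = act a (\<lambda>_. 0) (- t) t"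
        by (simp add: act_poly1[OF cm poly1_const])
    qed
    thus "\<exists>c. (\<lambda>a x l. \<phi> a x l - (\<Sum>s\<in>{\<phi>1, \<phi>2}. c s * s a x l)) \<in> B1 C act"
      unfolding feq[symmetric] by blast
  qed
  show ?thesis
    unfolding H1_dim_eq_def quot_dim_eq_def
    apply (rule exI[of _ "{\<phi>1, \<phi>2}"])
    apply (intro conjI)
        apply (rule fin)
       apply (rule card)
      apply (rule sub)
     apply (rule ind)
    apply (rule span)
    done
qed

theorem theorem4p2:
  fixes C :: "('k::field_char_0, 'c) conf_alg" and v :: 'c
    and act :: "'c \<Rightarrow> ('k \<Rightarrow> 'k) \<Rightarrow> 'k \<Rightarrow> 'k \<Rightarrow> 'k"
    and \<alpha> \<Delta> :: 'k
  assumes "is_U3 C v"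
    and "conf_module C act"
    and "\<forall>x l. act v (\<lambda>_. 1) x l = \<alpha> + x + \<Delta> * l"
    and "\<Delta> \<noteq> 0"
  shows "H1_dim_eq C act (if \<Delta> = 1 \<and> \<alpha> = 0 then 2 else 0)"
proof (cases "\<Delta> = 1 \<and> \<alpha> = 0")
  case True
  show ?thesis by (subst if_P[OF True]) (rule special_case[OF assms(1-3)], use True in simp_all)
next
  case False
  show ?thesis by (subst if_not_P[OF False]) (rule generic_case[OF assms False])
qed



end
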